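(* Let $\mathbb{F}$ be a field and let $(\mathcal{C},f,m)$ be a Floer triple over $\mathbb{F}$, with associated groups $HM_a^b$, Novikov homology $HM$, and limits $\overline{HM}$, $\underline{HM}$ as defined in the context. Then the maps $\overline{\rho}\colon HM\to\overline{HM}$, $\underline{\rho}\colon HM\to\underline{HM}$ and $\kappa\colon\overline{HM}\to\underline{HM}$ are well-defined linear maps, they satisfy $\kappa\circ\overline{\rho}=\underline{\rho}$, the map $\overline{\rho}$ is an isomorphism, and $\kappa$ (and therefore also $\underline{\rho}$) is surjective.
   Context: A Floer triple $(\mathcal{C},f,m)$ over a field $\mathbb{F}$ consists of a set $\mathcal{C}$, a function $f\colon\mathcal{C}\to\mathbb{R}$ and a function $m\colon\mathcal{C}\times\mathcal{C}\to\mathbb{F}$ such that: (i) for all $a\le b$ the set $\mathcal{C}_a^b=\{c\in\mathcal{C}: a\le f(c)\le b\}$ is finite; (ii) if $m(c_1,c_2)\neq0$ then $f(c_1)<f(c_2)$; (iii) for all $c_1,c_3\in\mathcal{C}$, $\sum_{c_2\in\mathcal{C}}m(c_1,c_2)m(c_2,c_3)=0$ (a finite sum by (i),(ii)). (Example: $\mathcal{C}$ the critical points of a Morse function whose moduli spaces of gradient lines in each action window are compact up to breaking, $m$ the signed count of gradient lines.) For $a,b\in\mathbb{R}$ let $CM_a^b$ be the $\mathbb{F}$-vector space with basis $\mathcal{C}_a^b$ (zero if $a>b$), with differential $\partial_a^b c=\sum_{c'\in\mathcal{C}_a^b}m(c',c)\,c'$; $(\partial_a^b)^2=0$, and $HM_a^b$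 denotes its homology. For $a_1\le a_2$ and any $b$, $p^b_{a_2,a_1}\colon CM^b_{a_1}\to CM^b_{a_2}$ sends a basis element $c$ to $c$ if $f(c)\ge a_2$ and to $0$ otherwise; for $b_1\le b_2$ and any $a$, $i_a^{b_2,b_1}\colon CM_a^{b_1}\to CM_a^{b_2}$ is the inclusion. These are chain maps; $Hp$, $Hi$ denote the induced maps on homology. Limits: for a family $(G_a)_{a\in\mathbb{R}}$ with maps $\pi_{a_2,a_1}\colon G_{a_1}\to G_{a_2}$ ($a_1\le a_2$), $\varprojlim_{a\to-\infty}G_a=\{(x_a)\in\prod_a G_a:\pi_{a_2,a_1}(x_{a_1})=x_{a_2}\ \forall a_1\le a_2\}$. For a family $(G^b)_{b\in\mathbb{R}}$ with maps $\iota^{b_2,b_1}\colon G^{b_1}\to G^{b_2}$ ($b_1\le b_2$), $\varinjlim_{b\to\infty}G^b=\bigoplus_b G^b/\langle \iota^{b_2,b_1}(x)-x\rangle$, with canonical maps $\iota^b\colon G^b\to\varinjlim G$. Define $\overline{HM}=\varinjlim_{b\to\infty}\varprojlim_{a\to-\infty}HM_a^b$ (inverse limit with respect to $Hp^b$, then direct limit with respect to the maps induced by $Hi$ componentwise) and $\underline{HM}=\varprojlim_{a\to-\infty}\varinjlim_{b\to\infty}HM_a^b$ (direct limit with respect to $Hi_a$, then inverse limit with respect to the maps induced by $Hp$). The canonical map $\kappa\colon\overline{HM}\to\underline{HM}$ sends the class of $(x_a)_a\in\varprojlim_a HM_a^b$ to $(\iota_a^b(x_a))_a$, where $\iota_a^b\colon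 HM_a^b\to\varinjlim_{b'}HM_a^{b'}$ is canonical. Novikov complex: $\Lambda$ is the space of formal sums $\xi=\sum_{c\in\mathcal{C}}\gamma_c c$, $\gamma_c\in\mathbb{F}$, such that $\{c:\gamma_c\ne0,\ f(c)>b\}$ is finite for every $b\in\mathbb{R}$, with differential $\partial\xi=\sum_c\gamma_c\sum_{c'}m(c',c)c'$; $HM=H(\Lambda,\partial)$. For a cycle $\xi$ choose $b$ with $f(c)\le b$ for all $c$ in the support of $\xi$, and let $\xi_a^b\in CM_a^b$ be the truncation keeping the terms with $a\le f(c)\le b$ (a cycle). Then $\overline{\rho}[\xi]$ is the image in $\overline{HM}$ of $([\xi_a^b])_a\in\varprojlim_a HM_a^b$, and $\underline{\rho}[\xi]=(\iota_a^b[\xi_a^b])_a\in\underline{HM}$. *)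

theory Defs
  imports Complex_Main "HOL-Library.Function_Algebras"
begin

record ('v, 'k) vs =
  vcarrier :: "'v set"
  vzero :: 'v
  vadd :: "'v \<Rightarrow> 'v \<Rightarrow> 'v"
  vscale :: "'k \<Rightarrow> 'v \<Rightarrow> 'v"

definition lin_map :: "('v, 'k) vs \<Rightarrow> ('w, 'k) vs \<Rightarrow> ('v \<Rightarrow> 'w) \<Rightarrow> bool" where
  "lin_map V W \<phi> \<longleftrightarrow>
     (\<forall>x\<in>vcarrier V. \<phi> x \<in> vcarrier W) \<and>
     (\<forall>x\<in>vcarrier V. \<forall>y\<in>vcarrier V. \<phi> (vadd V x y) = vadd W (\<phi> x) (\<phi> y)) \<and>
     (\<forall>k. \<forall>x\<in>vcarrier V. \<phi> (vscale V k x) = vscale W k (\<phi> x))"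

definition lin_iso :: "('v, 'k) vs \<Rightarrow> ('w, 'k) vs \<Rightarrow> ('v \<Rightarrow> 'w) \<Rightarrow> bool" where
  "lin_iso V W \<phi> \<longleftrightarrow> lin_map V W \<phi> \<and> bij_betw \<phi> (vcarrier V) (vcarrier W)"

definition pick :: "'a set \<Rightarrow> 'a" where
  "pick X = (SOME x. x \<in> X)"

definition hcls :: "('c \<Rightarrow> 'k::field) set \<Rightarrow> (('c \<Rightarrow> 'k) \<Rightarrow> ('c \<Rightarrow> 'k)) \<Rightarrow> ('c \<Rightarrow> 'k) \<Rightarrow> ('c \<Rightarrow> 'k) set" where
  "hcls Ch d z = {z + d y | y. y \<in> Ch}"

definition hom_vs :: "('c \<Rightarrow> 'k::field) set \<Rightarrow> (('c \<Rightarrow> 'k) \<Rightarrow> ('c \<Rightarrow> 'k)) \<Rightarrow> (('c \<Rightarrow> 'k) set, 'k) vs" where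
  "hom_vs Ch d =
     \<lparr> vcarrier = hcls Ch d ` {z \<in> Ch. d z = 0},
       vzero = hcls Ch d 0,
       vadd = (\<lambda>X Y. hcls Ch d (pick X + pick Y)),
       vscale = (\<lambda>k X. hcls Ch d (\<lambda>c. k * pick X c)) \<rparr>"

definition hmap :: "('c \<Rightarrow> 'k::field) set \<Rightarrow> (('c \<Rightarrow> 'k) \<Rightarrow> ('c \<Rightarrow> 'k)) \<Rightarrow> (('c \<Rightarrow> 'k) \<Rightarrow> ('c \<Rightarrow> 'k))
                    \<Rightarrow> ('c \<Rightarrow> 'k) set \<Rightarrow> ('c \<Rightarrow> 'k) set" where
  "hmap Ch' d' g X = hcls Ch' d' (g (pick X))"

text \<open>Inverse limit w.r.t. maps \<open>\<pi> a2 a1 : G a1 \<rightarrow> G a2\<close> for \<open>a1 \<le> a2\<close>.\<close>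
definition invlim_vs :: "(real \<Rightarrow> ('v, 'k) vs) \<Rightarrow> (real \<Rightarrow> real \<Rightarrow> 'v \<Rightarrow> 'v) \<Rightarrow> (real \<Rightarrow> 'v, 'k) vs" where
  "invlim_vs G \<pi> =
     \<lparr> vcarrier = {x. (\<forall>a. x a \<in> vcarrier (G a)) \<and> (\<forall>a1 a2. a1 \<le> a2 \<longrightarrow> \<pi> a2 a1 (x a1) = x a2)},
       vzero = (\<lambda>a. vzero (G a)),
       vadd = (\<lambda>x y a. vadd (G a) (x a) (y a)),
       vscale = (\<lambda>k x a. vscale (G a) k (x a)) \<rparr>"

text \<open>Direct limit w.r.t. maps \<open>\<iota> b2 b1 : G b1 \<rightarrow> G b2\<close> for \<open>b1 \<le> b2\<close>;
  an element is the class of a pair \<open>(b, x)\<close> with \<open>x \<in> G b\<close>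
  (\<open>dcls G \<iota> b\<close> is the canonical map \<open>G b \<rightarrow> lim G\<close>).\<close>
definition dcls :: "(real \<Rightarrow> ('v, 'k) vs) \<Rightarrow> (real \<Rightarrow> real \<Rightarrow> 'v \<Rightarrow> 'v) \<Rightarrow> real \<Rightarrow> 'v \<Rightarrow> (real \<times> 'v) set" where
  "dcls G \<iota> b x = {(b', x'). x' \<in> vcarrier (G b') \<and>
                      (\<exists>b''. b \<le> b'' \<and> b' \<le> b'' \<and> \<iota> b'' b x = \<iota> b'' b' x')}"

definition dlim_vs :: "(real \<Rightarrow> ('v, 'k) vs) \<Rightarrow> (real \<Rightarrow> real \<Rightarrow> 'v \<Rightarrow> 'v) \<Rightarrow> ((real \<times> 'v) set, 'k) vs" where
  "dlim_vs G \<iota> =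
     \<lparr> vcarrier = {dcls G \<iota> b x | b x. x \<in> vcarrier (G b)},
       vzero = dcls G \<iota> 0 (vzero (G 0)),
       vadd = (\<lambda>X Y. case pick X of (b1, x1) \<Rightarrow> case pick Y of (b2, x2) \<Rightarrow>
                 dcls G \<iota> (max b1 b2) (vadd (G (max b1 b2)) (\<iota> (max b1 b2) b1 x1) (\<iota> (max b1 b2) b2 x2))),
       vscale = (\<lambda>k X. case pick X of (b1, x1) \<Rightarrow> dcls G \<iota> b1 (vscale (G b1) k x1)) \<rparr>"

definition dlim_map :: "(real \<Rightarrow> ('w, 'k) vs) \<Rightarrow> (real \<Rightarrow> real \<Rightarrow> 'w \<Rightarrow> 'w) \<Rightarrow> (real \<Rightarrow> 'v \<Rightarrow> 'w)
                        \<Rightarrow> (real \<times> 'v) set \<Rightarrow> (real \<times> 'w) set" where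
  "dlim_map G' \<iota>' h X = (case pick X of (b, x) \<Rightarrow> dcls G' \<iota>' b (h b x))"

definition Cab :: "'c set \<Rightarrow> ('c \<Rightarrow> real) \<Rightarrow> real \<Rightarrow> real \<Rightarrow> 'c set" where
  "Cab C f a b = {c \<in> C. a \<le> f c \<and> f c \<le> b}"

definition floer_triple :: "'c set \<Rightarrow> ('c \<Rightarrow> real) \<Rightarrow> ('c \<Rightarrow> 'c \<Rightarrow> 'k::field) \<Rightarrow> bool" where
  "floer_triple C f m \<longleftrightarrow>
     (\<forall>a b. a \<le> b \<longrightarrow> finite (Cab C f a b)) \<and>
     (\<forall>c1\<in>C. \<forall>c2\<in>C. m c1 c2 \<noteq> 0 \<longrightarrow> f c1 < f c2) \<and>
     (\<forall>c1\<in>C. \<forall>c3\<in>C. (\<Sum>c2\<in>{c2\<in>C. m c1 c2 * m c2 c3 \<noteq> 0}. m c1 c2 * m c2 c3) = 0)"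

definition CM :: "'c set \<Rightarrow> ('c \<Rightarrow> real) \<Rightarrow> real \<Rightarrow> real \<Rightarrow> ('c \<Rightarrow> 'k::field) set" where
  "CM C f a b = {x. \<forall>c. x c \<noteq> 0 \<longrightarrow> c \<in> Cab C f a b}"

definition dCM :: "'c set \<Rightarrow> ('c \<Rightarrow> real) \<Rightarrow> ('c \<Rightarrow> 'c \<Rightarrow> 'k::field) \<Rightarrow> real \<Rightarrow> real \<Rightarrow> ('c \<Rightarrow> 'k) \<Rightarrow> ('c \<Rightarrow> 'k)" where
  "dCM C f m a b x = (\<lambda>c'. if c' \<in> Cab C f a b then (\<Sum>c\<in>Cab C f a b. m c' c * x c) else 0)"

definition HMab :: "'c set \<Rightarrow> ('c \<Rightarrow> real) \<Rightarrow> ('c \<Rightarrow> 'c \<Rightarrow> 'k::field) \<Rightarrow> real \<Rightarrow> real \<Rightarrow> (('c \<Rightarrow> 'k) set, 'k) vs" where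
  "HMab C f m a b = hom_vs (CM C f a b) (dCM C f m a b)"

text \<open>\<open>Hp^b_{a2,a1} : HM_{a1}^b \<rightarrow> HM_{a2}^b\<close> and \<open>Hi_a^{b2,b1} : HM_a^{b1} \<rightarrow> HM_a^{b2}\<close>.\<close>
definition Hp :: "'c set \<Rightarrow> ('c \<Rightarrow> real) \<Rightarrow> ('c \<Rightarrow> 'c \<Rightarrow> 'k::field) \<Rightarrow> real \<Rightarrow> real \<Rightarrow> real
                  \<Rightarrow> ('c \<Rightarrow> 'k) set \<Rightarrow> ('c \<Rightarrow> 'k) set" where
  "Hp C f m b a2 a1 = hmap (CM C f a2 b) (dCM C f m a2 b) (\<lambda>x c. if a2 \<le> f c then x c else 0)"

definition Hi :: "'c set \<Rightarrow> ('c \<Rightarrow> real) \<Rightarrow> ('c \<Rightarrow> 'c \<Rightarrow> 'k::field) \<Rightarrow> real \<Rightarrow> real \<Rightarrow> real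
                  \<Rightarrow> ('c \<Rightarrow> 'k) set \<Rightarrow> ('c \<Rightarrow> 'k) set" where
  "Hi C f m a b2 b1 = hmap (CM C f a b2) (dCM C f m a b2) id"

definition invlimB :: "'c set \<Rightarrow> ('c \<Rightarrow> real) \<Rightarrow> ('c \<Rightarrow> 'c \<Rightarrow> 'k::field) \<Rightarrow> real
                       \<Rightarrow> (real \<Rightarrow> ('c \<Rightarrow> 'k) set, 'k) vs" where
  "invlimB C f m b = invlim_vs (\<lambda>a. HMab C f m a b) (Hp C f m b)"

definition iotaB :: "'c set \<Rightarrow> ('c \<Rightarrow> real) \<Rightarrow> ('c \<Rightarrow> 'c \<Rightarrow> 'k::field) \<Rightarrow> real \<Rightarrow> real
                     \<Rightarrow> (real \<Rightarrow> ('c \<Rightarrow> 'k) set) \<Rightarrow> (real \<Rightarrow> ('c \<Rightarrow> 'k) set)" where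
  "iotaB C f m b2 b1 x = (\<lambda>a. Hi C f m a b2 b1 (x a))"

definition HMbar :: "'c set \<Rightarrow> ('c \<Rightarrow> real) \<Rightarrow> ('c \<Rightarrow> 'c \<Rightarrow> 'k::field)
                     \<Rightarrow> ((real \<times> (real \<Rightarrow> ('c \<Rightarrow> 'k) set)) set, 'k) vs" where
  "HMbar C f m = dlim_vs (invlimB C f m) (iotaB C f m)"

definition dlimA :: "'c set \<Rightarrow> ('c \<Rightarrow> real) \<Rightarrow> ('c \<Rightarrow> 'c \<Rightarrow> 'k::field) \<Rightarrow> real
                     \<Rightarrow> ((real \<times> ('c \<Rightarrow> 'k) set) set, 'k) vs" where
  "dlimA C f m a = dlim_vs (\<lambda>b. HMab C f m a b) (Hi C f m a)"

definition piA :: "'c set \<Rightarrow> ('c \<Rightarrow> real) \<Rightarrow> ('c \<Rightarrow> 'c \<Rightarrow> 'k::field) \<Rightarrow> real \<Rightarrow> real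
                   \<Rightarrow> (real \<times> ('c \<Rightarrow> 'k) set) set \<Rightarrow> (real \<times> ('c \<Rightarrow> 'k) set) set" where
  "piA C f m a2 a1 X = dlim_map (\<lambda>b. HMab C f m a2 b) (Hi C f m a2) (\<lambda>b. Hp C f m b a2 a1) X"

definition HMunder :: "'c set \<Rightarrow> ('c \<Rightarrow> real) \<Rightarrow> ('c \<Rightarrow> 'c \<Rightarrow> 'k::field)
                       \<Rightarrow> (real \<Rightarrow> (real \<times> ('c \<Rightarrow> 'k) set) set, 'k) vs" where
  "HMunder C f m = invlim_vs (dlimA C f m) (piA C f m)"

definition kappa_rep :: "'c set \<Rightarrow> ('c \<Rightarrow> real) \<Rightarrow> ('c \<Rightarrow> 'c \<Rightarrow> 'k::field)
                         \<Rightarrow> real \<times> (real \<Rightarrow> ('c \<Rightarrow> 'k) set) \<Rightarrow> real \<Rightarrow> (real \<times> ('c \<Rightarrow> 'k) set) set" where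
  "kappa_rep C f m p = (case p of (b, x) \<Rightarrow> (\<lambda>a. dcls (\<lambda>b'. HMab C f m a b') (Hi C f m a) b (x a)))"

definition kappa :: "'c set \<Rightarrow> ('c \<Rightarrow> real) \<Rightarrow> ('c \<Rightarrow> 'c \<Rightarrow> 'k::field)
                     \<Rightarrow> (real \<times> (real \<Rightarrow> ('c \<Rightarrow> 'k) set)) set \<Rightarrow> real \<Rightarrow> (real \<times> ('c \<Rightarrow> 'k) set) set" where
  "kappa C f m D = kappa_rep C f m (pick D)"

definition Nov :: "'c set \<Rightarrow> ('c \<Rightarrow> real) \<Rightarrow> ('c \<Rightarrow> 'k::field) set" where
  "Nov C f = {\<xi>. (\<forall>c. \<xi> c \<noteq> 0 \<longrightarrow> c \<in> C) \<and> (\<forall>b. finite {c. \<xi> c \<noteq> 0 \<and> b < f c})}"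

definition dNov :: "'c set \<Rightarrow> ('c \<Rightarrow> 'c \<Rightarrow> 'k::field) \<Rightarrow> ('c \<Rightarrow> 'k) \<Rightarrow> ('c \<Rightarrow> 'k)" where
  "dNov C m \<xi> = (\<lambda>c'. if c' \<in> C then (\<Sum>c\<in>{c\<in>C. \<xi> c * m c' c \<noteq> 0}. \<xi> c * m c' c) else 0)"

definition HMnov :: "'c set \<Rightarrow> ('c \<Rightarrow> real) \<Rightarrow> ('c \<Rightarrow> 'c \<Rightarrow> 'k::field) \<Rightarrow> (('c \<Rightarrow> 'k) set, 'k) vs" where
  "HMnov C f m = hom_vs (Nov C f) (dNov C m)"

definition trunc :: "('c \<Rightarrow> real) \<Rightarrow> real \<Rightarrow> real \<Rightarrow> ('c \<Rightarrow> 'k::field) \<Rightarrow> ('c \<Rightarrow> 'k)" where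
  "trunc f a b \<xi> = (\<lambda>c. if a \<le> f c \<and> f c \<le> b then \<xi> c else 0)"

definition upper_bound :: "('c \<Rightarrow> real) \<Rightarrow> ('c \<Rightarrow> 'k::field) \<Rightarrow> real \<Rightarrow> bool" where
  "upper_bound f \<xi> b \<longleftrightarrow> (\<forall>c. \<xi> c \<noteq> 0 \<longrightarrow> f c \<le> b)"

definition rhobar_cyc :: "'c set \<Rightarrow> ('c \<Rightarrow> real) \<Rightarrow> ('c \<Rightarrow> 'c \<Rightarrow> 'k::field) \<Rightarrow> ('c \<Rightarrow> 'k) \<Rightarrow> real
                          \<Rightarrow> (real \<times> (real \<Rightarrow> ('c \<Rightarrow> 'k) set)) set" where
  "rhobar_cyc C f m \<xi> b =
     dcls (invlimB C f m) (iotaB C f m) b (\<lambda>a. hcls (CM C f a b) (dCM C f m a b) (trunc f a b \<xi>))"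

definition rhounder_cyc :: "'c set \<Rightarrow> ('c \<Rightarrow> real) \<Rightarrow> ('c \<Rightarrow> 'c \<Rightarrow> 'k::field) \<Rightarrow> ('c \<Rightarrow> 'k) \<Rightarrow> real
                            \<Rightarrow> real \<Rightarrow> (real \<times> ('c \<Rightarrow> 'k) set) set" where
  "rhounder_cyc C f m \<xi> b =
     (\<lambda>a. dcls (\<lambda>b'. HMab C f m a b') (Hi C f m a) b (hcls (CM C f a b) (dCM C f m a b) (trunc f a b \<xi>)))"

definition rhobar :: "'c set \<Rightarrow> ('c \<Rightarrow> real) \<Rightarrow> ('c \<Rightarrow> 'c \<Rightarrow> 'k::field) \<Rightarrow> ('c \<Rightarrow> 'k) set
                      \<Rightarrow> (real \<times> (real \<Rightarrow> ('c \<Rightarrow> 'k) set)) set" where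
  "rhobar C f m X = rhobar_cyc C f m (pick X) (SOME b. upper_bound f (pick X) b)"

definition rhounder :: "'c set \<Rightarrow> ('c \<Rightarrow> real) \<Rightarrow> ('c \<Rightarrow> 'c \<Rightarrow> 'k::field) \<Rightarrow> ('c \<Rightarrow> 'k) set
                        \<Rightarrow> real \<Rightarrow> (real \<times> ('c \<Rightarrow> 'k) set) set" where
  "rhounder C f m X = rhounder_cyc C f m (pick X) (SOME b. upper_bound f (pick X) b)"

end

theory Submission
  imports Defs
begin

locale cplx =
  fixes Ch :: "('c \<Rightarrow> 'k::field) set" and d :: "('c \<Rightarrow> 'k) \<Rightarrow> ('c \<Rightarrow> 'k)"
  assumes zero_in: "0 \<in> Ch"
    and add_in: "x \<in> Ch \<Longrightarrow> y \<in> Ch \<Longrightarrow> x + y \<in> Ch"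
    and scale_in: "x \<in> Ch \<Longrightarrow> (\<lambda>c. k * x c) \<in> Ch"
    and d_in: "x \<in> Ch \<Longrightarrow> d x \<in> Ch"
    and d_add: "x \<in> Ch \<Longrightarrow> y \<in> Ch \<Longrightarrow> d (x + y) = d x + d y"
    and d_scale: "x \<in> Ch \<Longrightarrow> d (\<lambda>c. k * x c) = (\<lambda>c. k * d x c)"
    and dd: "x \<in> Ch \<Longrightarrow> d (d x) = 0"
begin

lemma uminus_eq: "- x = (\<lambda>c. (-1) * x c)" for x :: "'c \<Rightarrow> 'k"
  by (rule ext) simp

lemma uminus_in: "x \<in> Ch \<Longrightarrow> - x \<in> Ch"
  using scale_in[of x "-1"] by (simp add: uminus_eq)

lemma diff_in: "x \<in> Ch \<Longrightarrow> y \<in> Ch \<Longrightarrow> x - y \<in> Ch"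
  using add_in[of x "- y"] uminus_in[of y] by (metis diff_conv_add_uminus)

lemma d_zero: "d 0 = 0"
proof -
  have "d (\<lambda>c. 0 * (0::'c\<Rightarrow>'k) c) = (\<lambda>c. 0 * d 0 c)" using d_scale[OF zero_in] .
  thus ?thesis by (simp add: zero_fun_def)
qed

lemma d_uminus: "x \<in> Ch \<Longrightarrow> d (- x) = - d x"
  using d_scale[of x "-1"] by (simp add: uminus_eq)

lemma d_diff: "x \<in> Ch \<Longrightarrow> y \<in> Ch \<Longrightarrow> d (x - y) = d x - d y"
  using d_add[of x "- y"] uminus_in[of y] d_uminus[of y] by (metis diff_conv_add_uminus)

lemma hcls_self: "z \<in> hcls Ch d z"
proof -
  have "z = z + d 0" by (simp add: d_zero)
  thus ?thesis unfolding hcls_def using zero_in by blast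
qed

lemma hcls_mem_eq: assumes "z \<in> Ch" "z' \<in> hcls Ch d z" shows "hcls Ch d z' = hcls Ch d z"
proof -
  obtain y where y: "y \<in> Ch" "z' = z + d y" using assms(2) unfolding hcls_def by auto
  show ?thesis
  proof
    show "hcls Ch d z' \<subseteq> hcls Ch d z"
    proof
      fix w assume "w \<in> hcls Ch d z'"
      then obtain y' where "y' \<in> Ch" "w = z' + d y'" unfolding hcls_def by auto
      hence "w = z + d (y + y')" using y d_add by (simp add: add.assoc)
      thus "w \<in> hcls Ch d z" unfolding hcls_def using add_in[OF y(1) \<open>y' \<in> Ch\<close>] by auto
    qed
    show "hcls Ch d z \<subseteq> hcls Ch d z'"
    proof
      fix w assume "w \<in> hcls Ch d z"
      then obtain y' where "y' \<in> Ch" "w = z + d y'" unfolding hcls_def by auto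
      hence "w = z' + d (y' - y)" using y d_diff by (simp add: algebra_simps)
      thus "w \<in> hcls Ch d z'" unfolding hcls_def using diff_in[OF \<open>y' \<in> Ch\<close> y(1)] by auto
    qed
  qed
qed

lemma hcls_eq_iff: assumes "z \<in> Ch" "z' \<in> Ch"
  shows "hcls Ch d z = hcls Ch d z' \<longleftrightarrow> (\<exists>y\<in>Ch. z = z' + d y)"
proof
  assume "hcls Ch d z = hcls Ch d z'"
  hence "z \<in> hcls Ch d z'" using hcls_self by metis
  thus "\<exists>y\<in>Ch. z = z' + d y" unfolding hcls_def by auto
next
  assume "\<exists>y\<in>Ch. z = z' + d y"
  hence "z \<in> hcls Ch d z'" unfolding hcls_def by auto
  thus "hcls Ch d z = hcls Ch d z'" using hcls_mem_eq assms by blast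
qed

lemma hcls_sub: "z \<in> Ch \<Longrightarrow> hcls Ch d z \<subseteq> Ch"
  unfolding hcls_def using add_in d_in by auto

lemma hcls_cyc: "z \<in> Ch \<Longrightarrow> d z = 0 \<Longrightarrow> w \<in> hcls Ch d z \<Longrightarrow> d w = 0"
  unfolding hcls_def using d_add d_in dd by auto

lemma pick_hcls: "z \<in> Ch \<Longrightarrow> pick (hcls Ch d z) \<in> hcls Ch d z"
  unfolding pick_def using hcls_self by (metis someI)

lemma pick_hcls_props: assumes "z \<in> Ch" "d z = 0"
  shows "pick (hcls Ch d z) \<in> Ch" "d (pick (hcls Ch d z)) = 0"
    "hcls Ch d (pick (hcls Ch d z)) = hcls Ch d z"
  using pick_hcls[OF assms(1)] hcls_sub[OF assms(1)] hcls_cyc[OF assms] hcls_mem_eq[OF assms(1)]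
  by auto

lemma carrier_iff: "X \<in> vcarrier (hom_vs Ch d) \<longleftrightarrow> (\<exists>z. z \<in> Ch \<and> d z = 0 \<and> X = hcls Ch d z)"
  unfolding hom_vs_def by auto

lemma carrierI: "z \<in> Ch \<Longrightarrow> d z = 0 \<Longrightarrow> hcls Ch d z \<in> vcarrier (hom_vs Ch d)"
  using carrier_iff by blast

lemma vadd_hcls: assumes "z \<in> Ch" "d z = 0" "z' \<in> Ch" "d z' = 0"
  shows "vadd (hom_vs Ch d) (hcls Ch d z) (hcls Ch d z') = hcls Ch d (z + z')"
proof -
  obtain y where y: "y \<in> Ch" "pick (hcls Ch d z) = z + d y"
    using pick_hcls[OF assms(1)] unfolding hcls_def by auto
  obtain y' where y': "y' \<in> Ch" "pick (hcls Ch d z') = z' + d y'"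
    using pick_hcls[OF assms(3)] unfolding hcls_def by auto
  have "pick (hcls Ch d z) + pick (hcls Ch d z') = (z + z') + d (y + y')"
    using y y' d_add by (simp add: algebra_simps)
  hence "pick (hcls Ch d z) + pick (hcls Ch d z') \<in> hcls Ch d (z + z')"
    unfolding hcls_def using add_in y(1) y'(1) by blast
  hence "hcls Ch d (pick (hcls Ch d z) + pick (hcls Ch d z')) = hcls Ch d (z + z')"
    by (rule hcls_mem_eq[OF add_in[OF assms(1) assms(3)]])
  thus ?thesis unfolding hom_vs_def by simp
qed

lemma vscale_hcls: assumes "z \<in> Ch" "d z = 0"
  shows "vscale (hom_vs Ch d) k (hcls Ch d z) = hcls Ch d (\<lambda>c. k * z c)"
proof -
  obtain y where y: "y \<in> Ch" "pick (hcls Ch d z) = z + d y"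
    using pick_hcls[OF assms(1)] unfolding hcls_def by auto
  have "(\<lambda>c. k * pick (hcls Ch d z) c) = (\<lambda>c. k * z c) + d (\<lambda>c. k * y c)"
    using y d_scale[OF y(1)] by (auto simp: algebra_simps)
  hence "(\<lambda>c. k * pick (hcls Ch d z) c) \<in> hcls Ch d (\<lambda>c. k * z c)"
    unfolding hcls_def using scale_in[OF y(1)] by blast
  hence "hcls Ch d (\<lambda>c. k * pick (hcls Ch d z) c) = hcls Ch d (\<lambda>c. k * z c)"
    by (rule hcls_mem_eq[OF scale_in[OF assms(1)]])
  thus ?thesis unfolding hom_vs_def by simp
qed

end

lemma hmap_hcls:
  assumes "cplx Ch d" "cplx Ch' d'"
    and g_in: "\<And>x. x \<in> Ch \<Longrightarrow> g x \<in> Ch'"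
    and g_add: "\<And>x y. x \<in> Ch \<Longrightarrow> y \<in> Ch \<Longrightarrow> g (x + y) = g x + g y"
    and g_d: "\<And>x. x \<in> Ch \<Longrightarrow> g (d x) = d' (g x)"
    and z: "z \<in> Ch"
  shows "hmap Ch' d' g (hcls Ch d z) = hcls Ch' d' (g z)"
proof -
  interpret A: cplx Ch d by fact
  interpret B: cplx Ch' d' by fact
  obtain y where y: "y \<in> Ch" "pick (hcls Ch d z) = z + d y"
    using A.pick_hcls[OF z] unfolding hcls_def by auto
  have "g (pick (hcls Ch d z)) = g z + d' (g y)"
    using y g_add[OF z A.d_in[OF y(1)]] g_d[OF y(1)] by simp
  hence "g (pick (hcls Ch d z)) \<in> hcls Ch' d' (g z)"
    unfolding hcls_def using g_in[OF y(1)] by blast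
  hence "hcls Ch' d' (g (pick (hcls Ch d z))) = hcls Ch' d' (g z)"
    by (rule B.hcls_mem_eq[OF g_in[OF z]])
  thus ?thesis unfolding hmap_def by simp
qed


locale dsys =
  fixes G :: "real \<Rightarrow> ('v, 'k) vs" and \<iota> :: "real \<Rightarrow> real \<Rightarrow> 'v \<Rightarrow> 'v"
  assumes i_in: "b1 \<le> b2 \<Longrightarrow> x \<in> vcarrier (G b1) \<Longrightarrow> \<iota> b2 b1 x \<in> vcarrier (G b2)"
    and i_id: "x \<in> vcarrier (G b) \<Longrightarrow> \<iota> b b x = x"
    and i_comp: "b1 \<le> b2 \<Longrightarrow> b2 \<le> b3 \<Longrightarrow> x \<in> vcarrier (G b1) \<Longrightarrow> \<iota> b3 b2 (\<iota> b2 b1 x) = \<iota> b3 b1 x"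
    and i_add: "b1 \<le> b2 \<Longrightarrow> x \<in> vcarrier (G b1) \<Longrightarrow> y \<in> vcarrier (G b1) \<Longrightarrow>
        \<iota> b2 b1 (vadd (G b1) x y) = vadd (G b2) (\<iota> b2 b1 x) (\<iota> b2 b1 y)"
    and i_scale: "b1 \<le> b2 \<Longrightarrow> x \<in> vcarrier (G b1) \<Longrightarrow>
        \<iota> b2 b1 (vscale (G b1) k x) = vscale (G b2) k (\<iota> b2 b1 x)"
    and g_add: "x \<in> vcarrier (G b) \<Longrightarrow> y \<in> vcarrier (G b) \<Longrightarrow> vadd (G b) x y \<in> vcarrier (G b)"
    and g_scale: "x \<in> vcarrier (G b) \<Longrightarrow> vscale (G b) k x \<in> vcarrier (G b)"
begin

definition rel where "rel b x b' x' \<longleftrightarrow> (\<exists>B. b \<le> B \<and> b' \<le> B \<and> \<iota> B b x = \<iota> B b' x')"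

lemma rel_push:
  assumes "x \<in> vcarrier (G b)" "x' \<in> vcarrier (G b')" "b \<le> B" "b' \<le> B" "\<iota> B b x = \<iota> B b' x'" "B \<le> T"
  shows "\<iota> T b x = \<iota> T b' x'"
  using assms i_comp by metis

lemma rel_trans:
  assumes "x \<in> vcarrier (G b)" "x' \<in> vcarrier (G b')" "x'' \<in> vcarrier (G b'')"
    "rel b x b' x'" "rel b' x' b'' x''"
  shows "rel b x b'' x''"
proof -
  obtain B1 where B1: "b \<le> B1" "b' \<le> B1" "\<iota> B1 b x = \<iota> B1 b' x'" using assms(4) rel_def by auto
  obtain B2 where B2: "b' \<le> B2" "b'' \<le> B2" "\<iota> B2 b' x' = \<iota> B2 b'' x''" using assms(5) rel_def by auto
  define T where "T = max B1 B2"
  have "\<iota> T b x = \<iota> T b' x'" using rel_push[OF assms(1,2) B1] T_def by simp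
  also have "\<iota> T b' x' = \<iota> T b'' x''" using rel_push[OF assms(2,3) B2] T_def by simp
  finally show ?thesis unfolding rel_def using B1 B2 T_def by (intro exI[of _ T]) auto
qed

lemma rel_sym: "rel b x b' x' \<Longrightarrow> rel b' x' b x"
  unfolding rel_def by metis

lemma rel_refl: "x \<in> vcarrier (G b) \<Longrightarrow> rel b x b x"
  unfolding rel_def by auto

lemma dcls_iff: "(b', x') \<in> dcls G \<iota> b x \<longleftrightarrow> x' \<in> vcarrier (G b') \<and> rel b x b' x'"
  unfolding dcls_def rel_def by auto

lemma dcls_mem: "x \<in> vcarrier (G b) \<Longrightarrow> (b, x) \<in> dcls G \<iota> b x"
  using dcls_iff rel_refl by auto

lemma dcls_eq_iff:
  assumes "x \<in> vcarrier (G b)" "x' \<in> vcarrier (G b')"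
  shows "dcls G \<iota> b x = dcls G \<iota> b' x' \<longleftrightarrow> rel b x b' x'"
proof
  assume "dcls G \<iota> b x = dcls G \<iota> b' x'"
  hence "(b', x') \<in> dcls G \<iota> b x" using dcls_mem[OF assms(2)] by simp
  thus "rel b x b' x'" using dcls_iff by auto
next
  assume r: "rel b x b' x'"
  show "dcls G \<iota> b x = dcls G \<iota> b' x'"
  proof (rule set_eqI)
    fix p :: "real \<times> 'v"
    obtain b'' x'' where p: "p = (b'', x'')" by (cases p)
    show "p \<in> dcls G \<iota> b x \<longleftrightarrow> p \<in> dcls G \<iota> b' x'"
      unfolding p dcls_iff using rel_trans[OF assms(2,1) _ rel_sym[OF r]] rel_trans[OF assms(1,2) _ r]
      by blast
  qed
qed

lemma dcls_eqI:
  assumes "x \<in> vcarrier (G b)" "x' \<in> vcarrier (G b')" "b \<le> B" "b' \<le> B" "\<iota> B b x = \<iota> B b' x'"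
  shows "dcls G \<iota> b x = dcls G \<iota> b' x'"
  using dcls_eq_iff[OF assms(1,2)] assms(3-5) rel_def by blast

lemma dcls_push: "x \<in> vcarrier (G b) \<Longrightarrow> b \<le> B \<Longrightarrow> dcls G \<iota> B (\<iota> B b x) = dcls G \<iota> b x"
  by (rule dcls_eqI[of _ _ _ _ B]) (auto simp: i_in i_id)

lemma pick_dcls:
  assumes "x \<in> vcarrier (G b)"
  obtains b' x' where "pick (dcls G \<iota> b x) = (b', x')" "x' \<in> vcarrier (G b')" "rel b x b' x'"
proof -
  have "pick (dcls G \<iota> b x) \<in> dcls G \<iota> b x"
    unfolding pick_def using dcls_mem[OF assms] by (metis someI)
  thus ?thesis using that dcls_iff by (cases "pick (dcls G \<iota> b x)") auto
qed

lemma dlim_carrier: "X \<in> vcarrier (dlim_vs G \<iota>) \<longleftrightarrow> (\<exists>b x. x \<in> vcarrier (G b) \<and> X = dcls G \<iota> b x)"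
  unfolding dlim_vs_def by auto

lemma dlim_vadd:
  assumes x: "x \<in> vcarrier (G b)" and y: "y \<in> vcarrier (G b')" and B: "b \<le> B" "b' \<le> B"
  shows "vadd (dlim_vs G \<iota>) (dcls G \<iota> b x) (dcls G \<iota> b' y) =
         dcls G \<iota> B (vadd (G B) (\<iota> B b x) (\<iota> B b' y))"
proof -
  obtain b1 x1 where p1: "pick (dcls G \<iota> b x) = (b1, x1)" "x1 \<in> vcarrier (G b1)" "rel b x b1 x1"
    using pick_dcls[OF x] by blast
  obtain b2 x2 where p2: "pick (dcls G \<iota> b' y) = (b2, x2)" "x2 \<in> vcarrier (G b2)" "rel b' y b2 x2"
    using pick_dcls[OF y] by blast
  obtain B1 where B1: "b \<le> B1" "b1 \<le> B1" "\<iota> B1 b x = \<iota> B1 b1 x1" using p1(3) rel_def by auto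
  obtain B2 where B2: "b' \<le> B2" "b2 \<le> B2" "\<iota> B2 b' y = \<iota> B2 b2 x2" using p2(3) rel_def by auto
  define M where "M = max b1 b2"
  define T where "T = max (max M B) (max B1 B2)"
  have M: "b1 \<le> M" "b2 \<le> M" and T: "M \<le> T" "B \<le> T" "B1 \<le> T" "B2 \<le> T"
    unfolding M_def T_def by auto
  have ix1: "\<iota> M b1 x1 \<in> vcarrier (G M)" using i_in M p1 by auto
  have ix2: "\<iota> M b2 x2 \<in> vcarrier (G M)" using i_in M p2 by auto
  have ix: "\<iota> B b x \<in> vcarrier (G B)" using i_in B x by auto
  have iy: "\<iota> B b' y \<in> vcarrier (G B)" using i_in B y by auto
  have e1: "\<iota> T b1 x1 = \<iota> T b x" using rel_push[OF x p1(2) B1 T(3)] by simp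
  have e2: "\<iota> T b2 x2 = \<iota> T b' y" using rel_push[OF y p2(2) B2 T(4)] by simp
  have "\<iota> T M (vadd (G M) (\<iota> M b1 x1) (\<iota> M b2 x2)) = vadd (G T) (\<iota> T b1 x1) (\<iota> T b2 x2)"
    using i_add[OF T(1) ix1 ix2] i_comp[OF M(1) T(1) p1(2)] i_comp[OF M(2) T(1) p2(2)] by simp
  also have "\<dots> = vadd (G T) (\<iota> T b x) (\<iota> T b' y)" using e1 e2 by simp
  also have "\<dots> = \<iota> T B (vadd (G B) (\<iota> B b x) (\<iota> B b' y))"
    using i_add[OF T(2) ix iy] i_comp[OF B(1) T(2) x] i_comp[OF B(2) T(2) y] by simp
  finally have "dcls G \<iota> M (vadd (G M) (\<iota> M b1 x1) (\<iota> M b2 x2)) = dcls G \<iota> B (vadd (G B) (\<iota> B b x) (\<iota> B b' y))"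
    by (intro dcls_eqI[OF g_add[OF ix1 ix2] g_add[OF ix iy] T(1) T(2)])
  thus ?thesis unfolding dlim_vs_def using p1(1) p2(1) M_def by simp
qed

lemma dlim_vscale:
  assumes x: "x \<in> vcarrier (G b)"
  shows "vscale (dlim_vs G \<iota>) k (dcls G \<iota> b x) = dcls G \<iota> b (vscale (G b) k x)"
proof -
  obtain b1 x1 where p1: "pick (dcls G \<iota> b x) = (b1, x1)" "x1 \<in> vcarrier (G b1)" "rel b x b1 x1"
    using pick_dcls[OF x] by blast
  obtain B1 where B1: "b \<le> B1" "b1 \<le> B1" "\<iota> B1 b x = \<iota> B1 b1 x1" using p1(3) rel_def by auto
  have "\<iota> B1 b1 (vscale (G b1) k x1) = \<iota> B1 b (vscale (G b) k x)"
    using i_scale[OF B1(1) x] i_scale[OF B1(2) p1(2)] B1(3) by simp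
  hence "dcls G \<iota> b1 (vscale (G b1) k x1) = dcls G \<iota> b (vscale (G b) k x)"
    by (intro dcls_eqI[OF g_scale[OF p1(2)] g_scale[OF x] B1(2) B1(1)])
  thus ?thesis unfolding dlim_vs_def using p1(1) by simp
qed

end

lemma dlim_map_dcls:
  assumes "dsys G \<iota>" "dsys G' \<iota>'"
    and h_in: "\<And>b x. x \<in> vcarrier (G b) \<Longrightarrow> h b x \<in> vcarrier (G' b)"
    and h_comm: "\<And>b1 b2 x. b1 \<le> b2 \<Longrightarrow> x \<in> vcarrier (G b1) \<Longrightarrow> h b2 (\<iota> b2 b1 x) = \<iota>' b2 b1 (h b1 x)"
    and x: "x \<in> vcarrier (G b)"
  shows "dlim_map G' \<iota>' h (dcls G \<iota> b x) = dcls G' \<iota>' b (h b x)"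
proof -
  interpret A: dsys G \<iota> by fact
  interpret B: dsys G' \<iota>' by fact
  obtain b1 x1 where p1: "pick (dcls G \<iota> b x) = (b1, x1)" "x1 \<in> vcarrier (G b1)" "A.rel b x b1 x1"
    using A.pick_dcls[OF x] by blast
  obtain B1 where B1: "b \<le> B1" "b1 \<le> B1" "\<iota> B1 b x = \<iota> B1 b1 x1" using p1(3) A.rel_def by auto
  have "\<iota>' B1 b1 (h b1 x1) = \<iota>' B1 b (h b x)"
    using h_comm[OF B1(1) x] h_comm[OF B1(2) p1(2)] B1(3) by simp
  hence "dcls G' \<iota>' b1 (h b1 x1) = dcls G' \<iota>' b (h b x)"
    by (intro B.dcls_eqI[OF h_in[OF p1(2)] h_in[OF x] B1(2) B1(1)])
  thus ?thesis unfolding dlim_map_def using p1(1) by simp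
qed


lemma sum_fun_apply: "finite A \<Longrightarrow> (\<Sum>a\<in>A. g a) x = (\<Sum>a\<in>A. g a x)" for g :: "'a \<Rightarrow> 'b \<Rightarrow> 'c::comm_monoid_add"
  by (induction A rule: finite_induct) auto

locale floer =
  fixes C :: "'c set" and f :: "'c \<Rightarrow> real" and m :: "'c \<Rightarrow> 'c \<Rightarrow> 'k::field"
  assumes ft: "floer_triple C f m"
begin

abbreviation "D \<equiv> dNov C m"

lemma finite_Cab: "finite (Cab C f a b)"
proof (cases "a \<le> b")
  case True thus ?thesis using ft unfolding floer_triple_def by auto
next
  case False hence "Cab C f a b = {}" unfolding Cab_def by auto
  thus ?thesis by simp
qed

lemma m_ord: "c1 \<in> C \<Longrightarrow> c2 \<in> C \<Longrightarrow> m c1 c2 \<noteq> 0 \<Longrightarrow> f c1 < f c2"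
  using ft unfolding floer_triple_def by auto

lemma m_cancel: "c1 \<in> C \<Longrightarrow> c3 \<in> C \<Longrightarrow> (\<Sum>c2\<in>{c2\<in>C. m c1 c2 * m c2 c3 \<noteq> 0}. m c1 c2 * m c2 c3) = 0"
  using ft unfolding floer_triple_def by auto

lemma nov_supp: "x \<in> Nov C f \<Longrightarrow> x c \<noteq> 0 \<Longrightarrow> c \<in> C"
  unfolding Nov_def by auto

lemma nov_fin: "x \<in> Nov C f \<Longrightarrow> finite {c. x c \<noteq> 0 \<and> t < f c}"
  unfolding Nov_def by auto

lemma nov_bounded: assumes "x \<in> Nov C f" shows "\<exists>b. upper_bound f x b"
proof -
  define S where "S = {c. x c \<noteq> 0 \<and> 0 < f c}"
  have fin: "finite S" using nov_fin[OF assms] S_def by simp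
  define b where "b = max 0 (Max (insert 0 (f ` S)))"
  have "upper_bound f x b" unfolding upper_bound_def
  proof (intro allI impI)
    fix c assume "x c \<noteq> 0"
    show "f c \<le> b"
    proof (cases "0 < f c")
      case True hence "c \<in> S" using \<open>x c \<noteq> 0\<close> S_def by auto
      hence "f c \<le> Max (insert 0 (f ` S))" using fin by (intro Max_ge) auto
      thus ?thesis unfolding b_def by linarith
    next
      case False thus ?thesis unfolding b_def by linarith
    qed
  qed
  thus ?thesis by blast
qed

lemma nov_zero: "0 \<in> Nov C f"
  unfolding Nov_def by simp

lemma nov_add: assumes "x \<in> Nov C f" "y \<in> Nov C f" shows "x + y \<in> Nov C f"
proof -
  have "\<And>t. {c. (x + y) c \<noteq> 0 \<and> t < f c} \<subseteq> {c. x c \<noteq> 0 \<and> t < f c} \<union> {c. y c \<noteq> 0 \<and> t < f c}"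
    by auto
  hence "\<And>t. finite {c. (x + y) c \<noteq> 0 \<and> t < f c}"
    using nov_fin[OF assms(1)] nov_fin[OF assms(2)] by (meson finite_UnI finite_subset)
  moreover have "\<And>c. (x + y) c \<noteq> 0 \<Longrightarrow> c \<in> C"
    using nov_supp[OF assms(1)] nov_supp[OF assms(2)] by (metis add.right_neutral plus_fun_apply)
  ultimately show ?thesis unfolding Nov_def by blast
qed

lemma nov_scale: assumes "x \<in> Nov C f" shows "(\<lambda>c. k * x c) \<in> Nov C f"
proof -
  have "\<And>t. {c. k * x c \<noteq> 0 \<and> t < f c} \<subseteq> {c. x c \<noteq> 0 \<and> t < f c}" by auto
  hence "\<And>t. finite {c. k * x c \<noteq> 0 \<and> t < f c}"
    using nov_fin[OF assms(1)] by (meson finite_subset)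
  moreover have "\<And>c. k * x c \<noteq> 0 \<Longrightarrow> c \<in> C"
    using nov_supp[OF assms(1)] by fastforce
  ultimately show ?thesis unfolding Nov_def by blast
qed

lemma CM_Nov: "x \<in> CM C f a b \<Longrightarrow> x \<in> Nov C f"
proof -
  assume x: "x \<in> CM C f a b"
  have "\<And>t. {c. x c \<noteq> 0 \<and> t < f c} \<subseteq> Cab C f a b" using x unfolding CM_def by auto
  hence "\<And>t. finite {c. x c \<noteq> 0 \<and> t < f c}" using finite_Cab finite_subset by blast
  moreover have "\<And>c. x c \<noteq> 0 \<Longrightarrow> c \<in> C" using x unfolding CM_def Cab_def by auto
  ultimately show ?thesis unfolding Nov_def by blast
qed

lemma D_sum:
  assumes "c' \<in> C" "finite F" "F \<subseteq> C" "{c\<in>C. x c \<noteq> 0 \<and> m c' c \<noteq> 0} \<subseteq> F"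
  shows "D x c' = (\<Sum>c\<in>F. x c * m c' c)"
proof -
  have sub: "{c\<in>C. x c * m c' c \<noteq> 0} \<subseteq> F" using assms(4) by auto
  have "D x c' = (\<Sum>c\<in>{c\<in>C. x c * m c' c \<noteq> 0}. x c * m c' c)"
    unfolding dNov_def using assms(1) by simp
  also have "\<dots> = (\<Sum>c\<in>F. x c * m c' c)"
    by (rule sum.mono_neutral_left[OF assms(2) sub]) (use assms(3) in auto)
  finally show ?thesis .
qed

lemma D_notC: "c' \<notin> C \<Longrightarrow> D x c' = 0"
  unfolding dNov_def by simp

definition Fs :: "('c \<Rightarrow> 'k) \<Rightarrow> real \<Rightarrow> 'c set" where
  "Fs x t = {c\<in>C. x c \<noteq> 0 \<and> t < f c}"

lemma Fs_fin: "x \<in> Nov C f \<Longrightarrow> finite (Fs x t)"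
  by (rule finite_subset[OF _ nov_fin]) (auto simp: Fs_def)

lemma D_Fs: "x \<in> Nov C f \<Longrightarrow> c' \<in> C \<Longrightarrow> D x c' = (\<Sum>c\<in>Fs x (f c'). x c * m c' c)"
  by (rule D_sum[OF _ Fs_fin]) (auto simp: Fs_def dest: m_ord)

lemma D_local:
  assumes "x \<in> Nov C f" "y \<in> Nov C f" "\<And>c. f c' < f c \<Longrightarrow> x c = y c"
  shows "D x c' = D y c'"
proof (cases "c' \<in> C")
  case False thus ?thesis by (simp add: D_notC)
next
  case True
  define F where "F = Fs x (f c') \<union> Fs y (f c')"
  have fin: "finite F" unfolding F_def using Fs_fin assms by auto
  have "D x c' = (\<Sum>c\<in>F. x c * m c' c)"
    by (rule D_sum[OF True fin]) (auto simp: F_def Fs_def dest: m_ord[OF True])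
  also have "\<dots> = (\<Sum>c\<in>F. y c * m c' c)"
    by (rule sum.cong) (auto simp: F_def Fs_def assms(3))
  also have "\<dots> = D y c'"
    by (rule D_sum[OF True fin, symmetric]) (auto simp: F_def Fs_def dest: m_ord[OF True])
  finally show ?thesis .
qed

lemma D_add: assumes "x \<in> Nov C f" "y \<in> Nov C f" shows "D (x + y) = D x + D y"
proof (rule ext)
  fix c'
  show "D (x + y) c' = (D x + D y) c'"
  proof (cases "c' \<in> C")
    case False thus ?thesis by (simp add: D_notC)
  next
    case True
    define F where "F = Fs x (f c') \<union> Fs y (f c')"
    have fin: "finite F" unfolding F_def using Fs_fin assms by auto
    have 1: "D x c' = (\<Sum>c\<in>F. x c * m c' c)"
      by (rule D_sum[OF True fin]) (auto simp: F_def Fs_def dest: m_ord[OF True])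
    have 2: "D y c' = (\<Sum>c\<in>F. y c * m c' c)"
      by (rule D_sum[OF True fin]) (auto simp: F_def Fs_def dest: m_ord[OF True])
    have 3: "D (x + y) c' = (\<Sum>c\<in>F. (x + y) c * m c' c)"
      by (rule D_sum[OF True fin]) (auto simp: F_def Fs_def dest: m_ord[OF True])
    show ?thesis unfolding plus_fun_apply 1 2 3 by (simp add: sum.distrib distrib_right)
  qed
qed

lemma D_scale: assumes "x \<in> Nov C f" shows "D (\<lambda>c. k * x c) = (\<lambda>c. k * D x c)"
proof (rule ext)
  fix c'
  show "D (\<lambda>c. k * x c) c' = k * D x c'"
  proof (cases "c' \<in> C")
    case False thus ?thesis by (simp add: D_notC)
  next
    case True
    define F where "F = Fs x (f c')"
    have fin: "finite F" unfolding F_def using Fs_fin assms by auto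
    have 1: "D x c' = (\<Sum>c\<in>F. x c * m c' c)"
      by (rule D_sum[OF True fin]) (auto simp: F_def Fs_def dest: m_ord[OF True])
    have 3: "D (\<lambda>c. k * x c) c' = (\<Sum>c\<in>F. k * x c * m c' c)"
      by (rule D_sum[OF True fin]) (auto simp: F_def Fs_def dest: m_ord[OF True])
    show ?thesis unfolding 1 3 by (simp add: sum_distrib_left mult.assoc)
  qed
qed

lemma D_nonzero: assumes "D x c' \<noteq> 0" shows "c' \<in> C" "\<exists>c\<in>C. x c \<noteq> 0 \<and> m c' c \<noteq> 0"
proof -
  show c': "c' \<in> C" using assms D_notC by blast
  have "(\<Sum>c\<in>{c\<in>C. x c * m c' c \<noteq> 0}. x c * m c' c) \<noteq> 0" using assms c' unfolding dNov_def by simp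
  then obtain c where "c \<in> {c\<in>C. x c * m c' c \<noteq> 0}" using sum.neutral by (metis (no_types, lifting))
  thus "\<exists>c\<in>C. x c \<noteq> 0 \<and> m c' c \<noteq> 0" by auto
qed

lemma D_bound: assumes "x \<in> Nov C f" "upper_bound f x b" shows "upper_bound f (D x) b"
  unfolding upper_bound_def
proof (intro allI impI)
  fix c' assume nz: "D x c' \<noteq> 0"
  obtain c where c: "c \<in> C" "x c \<noteq> 0" "m c' c \<noteq> 0" using D_nonzero[OF nz] by blast
  have "f c' < f c" using m_ord[OF D_nonzero(1)[OF nz] c(1) c(3)] .
  moreover have "f c \<le> b" using assms(2) c(2) unfolding upper_bound_def by auto
  ultimately show "f c' \<le> b" by simp
qed

lemma D_Nov: assumes "x \<in> Nov C f" shows "D x \<in> Nov C f"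
proof -
  obtain b where b: "upper_bound f x b" using nov_bounded[OF assms] by blast
  have "\<And>t. {c'. D x c' \<noteq> 0 \<and> t < f c'} \<subseteq> Cab C f t b"
    using D_bound[OF assms b] D_nonzero(1) unfolding upper_bound_def Cab_def by fastforce
  hence "\<And>t. finite {c'. D x c' \<noteq> 0 \<and> t < f c'}" using finite_Cab finite_subset by blast
  moreover have "\<And>c. D x c \<noteq> 0 \<Longrightarrow> c \<in> C" using D_nonzero(1) by blast
  ultimately show ?thesis unfolding Nov_def by blast
qed

lemma DD: assumes x: "x \<in> Nov C f" shows "D (D x) = 0"
proof (rule ext)
  fix c''
  show "D (D x) c'' = 0 c''"
  proof (cases "c'' \<in> C")
    case False thus ?thesis by (simp add: D_notC)
  next
    case True
    obtain M where M: "upper_bound f x M" using nov_bounded[OF x] by blast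
    define F2 where "F2 = Fs x (f c'')"
    define F1 where "F1 = Cab C f (f c'') M"
    have fin1: "finite F1" unfolding F1_def using finite_Cab .
    have fin2: "finite F2" unfolding F2_def using Fs_fin[OF x] .
    have "D (D x) c'' = (\<Sum>c'\<in>F1. D x c' * m c'' c')"
    proof (rule D_sum[OF True fin1])
      show "F1 \<subseteq> C" unfolding F1_def Cab_def by auto
      show "{c \<in> C. D x c \<noteq> 0 \<and> m c'' c \<noteq> 0} \<subseteq> F1"
      proof
        fix c' assume c': "c' \<in> {c \<in> C. D x c \<noteq> 0 \<and> m c'' c \<noteq> 0}"
        obtain c where c: "c \<in> C" "x c \<noteq> 0" "m c' c \<noteq> 0" using D_nonzero(2) c' by blast
        have "f c' < f c" using m_ord c c' by blast
        moreover have "f c \<le> M" using M c unfolding upper_bound_def by auto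
        moreover have "f c'' < f c'" using m_ord True c' by blast
        ultimately show "c' \<in> F1" unfolding F1_def Cab_def using c' by auto
      qed
    qed
    also have "\<dots> = (\<Sum>c'\<in>F1. (\<Sum>c\<in>F2. x c * m c' c) * m c'' c')"
    proof (rule sum.cong[OF refl])
      fix c' assume c': "c' \<in> F1"
      have "D x c' = (\<Sum>c\<in>F2. x c * m c' c)"
      proof (rule D_sum[OF _ fin2])
        show "c' \<in> C" using c' unfolding F1_def Cab_def by auto
        show "F2 \<subseteq> C" unfolding F2_def Fs_def by auto
        show "{c \<in> C. x c \<noteq> 0 \<and> m c' c \<noteq> 0} \<subseteq> F2"
          using c' m_ord unfolding F1_def F2_def Fs_def Cab_def by fastforce
      qed
      thus "D x c' * m c'' c' = (\<Sum>c\<in>F2. x c * m c' c) * m c'' c'" by simp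
    qed
    also have "\<dots> = (\<Sum>c'\<in>F1. \<Sum>c\<in>F2. x c * (m c'' c' * m c' c))"
    proof (rule sum.cong[OF refl])
      fix c' show "(\<Sum>c\<in>F2. x c * m c' c) * m c'' c' = (\<Sum>c\<in>F2. x c * (m c'' c' * m c' c))"
        unfolding sum_distrib_right by (rule sum.cong[OF refl]) (simp add: mult_ac)
    qed
    also have "\<dots> = (\<Sum>c\<in>F2. \<Sum>c'\<in>F1. x c * (m c'' c' * m c' c))"
      by (rule sum.swap)
    also have "\<dots> = (\<Sum>c\<in>F2. x c * (\<Sum>c'\<in>F1. m c'' c' * m c' c))"
      by (simp add: sum_distrib_left)
    also have "\<dots> = 0"
    proof (rule sum.neutral, rule ballI)
      fix c assume c: "c \<in> F2"
      have cC: "c \<in> C" using c unfolding F2_def Fs_def by auto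
      have "(\<Sum>c'\<in>F1. m c'' c' * m c' c) = (\<Sum>c'\<in>{c2\<in>C. m c'' c2 * m c2 c \<noteq> 0}. m c'' c' * m c' c)"
      proof (rule sum.mono_neutral_right[OF fin1])
        show "{c2 \<in> C. m c'' c2 * m c2 c \<noteq> 0} \<subseteq> F1"
        proof
          fix c' assume c': "c' \<in> {c2 \<in> C. m c'' c2 * m c2 c \<noteq> 0}"
          have "f c'' < f c'" "f c' < f c" using m_ord True cC c' by auto
          moreover have "f c \<le> M" using M c unfolding upper_bound_def F2_def Fs_def by auto
          ultimately show "c' \<in> F1" using c' unfolding F1_def Cab_def by auto
        qed
        show "\<forall>i\<in>F1 - {c2 \<in> C. m c'' c2 * m c2 c \<noteq> 0}. m c'' i * m i c = 0"
          unfolding F1_def Cab_def by auto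
      qed
      also have "\<dots> = 0" using m_cancel[OF True cC] .
      finally show "x c * (\<Sum>c'\<in>F1. m c'' c' * m c' c) = 0" by simp
    qed
    finally show ?thesis by simp
  qed
qed

lemma cplx_Nov: "cplx (Nov C f) D"
  by unfold_locales (auto simp: nov_zero nov_add nov_scale D_Nov D_add D_scale DD)

end

context floer begin

definition lt :: "real \<Rightarrow> ('c \<Rightarrow> 'k) \<Rightarrow> ('c \<Rightarrow> 'k)" where
  "lt a x = (\<lambda>c. if a \<le> f c then x c else 0)"

abbreviation CMab :: "real \<Rightarrow> real \<Rightarrow> ('c \<Rightarrow> 'k) set" where "CMab a b \<equiv> CM C f a b"
abbreviation Nv :: "('c \<Rightarrow> 'k) set" where "Nv \<equiv> Nov C f"
abbreviation "dd a b \<equiv> dCM C f m a b"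
abbreviation "hc a b z \<equiv> hcls (CMab a b) (dCM C f m a b) z"
abbreviation "HM a b \<equiv> HMab C f m a b"

lemma CM_iff: "x \<in> CMab a b \<longleftrightarrow> (\<forall>c. x c \<noteq> 0 \<longrightarrow> c \<in> C \<and> a \<le> f c \<and> f c \<le> b)"
  unfolding CM_def Cab_def by auto

lemma CM_zero: "0 \<in> CMab a b" by (simp add: CM_iff)

lemma CM_add: "x \<in> CMab a b \<Longrightarrow> y \<in> CMab a b \<Longrightarrow> x + y \<in> CMab a b"
  unfolding CM_iff by (metis add.right_neutral plus_fun_apply)

lemma CM_scale: "x \<in> CMab a b \<Longrightarrow> (\<lambda>c. k * x c) \<in> CMab a b"
  unfolding CM_iff by auto

lemma CM_diff: "x \<in> CMab a b \<Longrightarrow> y \<in> CMab a b \<Longrightarrow> x - y \<in> CMab a b"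
  unfolding CM_iff by (metis diff_zero minus_apply)

lemma CM_mono: "a' \<le> a \<Longrightarrow> b \<le> b' \<Longrightarrow> x \<in> CMab a b \<Longrightarrow> x \<in> CMab a' b'"
  unfolding CM_iff by force

lemma CM_bound: "x \<in> CMab a b \<Longrightarrow> upper_bound f x b"
  unfolding CM_iff upper_bound_def by auto

lemma trunc_CM: "(\<And>c. y c \<noteq> 0 \<Longrightarrow> c \<in> C) \<Longrightarrow> trunc f a b y \<in> CMab a b"
  unfolding CM_iff trunc_def by auto

lemma trunc_Nov: assumes "x \<in> Nv" shows "trunc f a b x \<in> Nv"
proof -
  have "trunc f a b x \<in> CMab a b" by (rule trunc_CM) (use nov_supp[OF assms] in blast)
  thus ?thesis by (rule CM_Nov)
qed

lemma lt_Nov: assumes "x \<in> Nv" shows "lt a x \<in> Nv"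
proof -
  have "\<And>t. {c. lt a x c \<noteq> 0 \<and> t < f c} \<subseteq> {c. x c \<noteq> 0 \<and> t < f c}" unfolding lt_def by auto
  hence "\<And>t. finite {c. lt a x c \<noteq> 0 \<and> t < f c}" using nov_fin[OF assms] finite_subset by blast
  moreover have "\<And>c. lt a x c \<noteq> 0 \<Longrightarrow> c \<in> C" using nov_supp[OF assms] unfolding lt_def
    by (metis (full_types))
  ultimately show ?thesis unfolding Nov_def by blast
qed

lemma dCM_eq: assumes x: "x \<in> CMab a b" shows "dd a b x = trunc f a b (D x)"
proof (rule ext)
  fix c'
  show "dd a b x c' = trunc f a b (D x) c'"
  proof (cases "c' \<in> Cab C f a b")
    case True
    hence c'C: "c' \<in> C" and w: "a \<le> f c'" "f c' \<le> b" unfolding Cab_def by auto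
    have "D x c' = (\<Sum>c\<in>Cab C f a b. x c * m c' c)"
      by (rule D_sum[OF c'C finite_Cab]) (use x in \<open>auto simp: CM_def Cab_def\<close>)
    thus ?thesis using True w unfolding dCM_def trunc_def by (simp add: mult.commute)
  next
    case False
    thus ?thesis unfolding dCM_def trunc_def Cab_def by (auto simp: D_notC)
  qed
qed

lemma trunc_local: assumes "x \<in> Nv" "upper_bound f x b" "a \<le> f c'"
  shows "D (trunc f a b x) c' = D x c'"
  by (rule D_local[OF trunc_Nov[OF assms(1)] assms(1)])
     (use assms in \<open>auto simp: trunc_def upper_bound_def\<close>)

lemma lt_local: assumes "x \<in> Nv" "a \<le> f c'"
  shows "D (lt a x) c' = D x c'"
  by (rule D_local[OF lt_Nov[OF assms(1)] assms(1)]) (use assms in \<open>auto simp: lt_def\<close>)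

lemma dCM_trunc: assumes "x \<in> Nv" "upper_bound f x b"
  shows "dd a b (trunc f a b x) = trunc f a b (D x)"
proof -
  have "dd a b (trunc f a b x) = trunc f a b (D (trunc f a b x))"
    by (rule dCM_eq[OF trunc_CM]) (auto dest: nov_supp[OF assms(1)])
  also have "\<dots> = trunc f a b (D x)"
  proof (rule ext)
    fix c
    show "trunc f a b (D (trunc f a b x)) c = trunc f a b (D x) c"
      apply (simp only: trunc_def[of f a b "D (trunc f a b x)"] trunc_def[of f a b "D x"])
      using trunc_local[OF assms, of a c] by simp
  qed
  finally show ?thesis .
qed

lemma trunc_id: "x \<in> CMab a b \<Longrightarrow> trunc f a b x = x"
  unfolding trunc_def CM_iff by (auto intro!: ext)

lemma trunc_bound_eq: "upper_bound f x b \<Longrightarrow> b \<le> B \<Longrightarrow> trunc f a B x = trunc f a b x"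
  unfolding trunc_def upper_bound_def by (auto intro!: ext)

lemma cplx_CM: "cplx (CMab a b) (dd a b)"
proof
  show "0 \<in> CMab a b" by (rule CM_zero)
  show "\<And>x y. x \<in> CMab a b \<Longrightarrow> y \<in> CMab a b \<Longrightarrow> x + y \<in> CMab a b" by (rule CM_add)
  show "\<And>x k. x \<in> CMab a b \<Longrightarrow> (\<lambda>c. k * x c) \<in> CMab a b" by (rule CM_scale)
  show "\<And>x. x \<in> CMab a b \<Longrightarrow> dd a b x \<in> CMab a b"
    using dCM_eq trunc_CM D_nonzero(1) by metis
  show "\<And>x y. x \<in> CMab a b \<Longrightarrow> y \<in> CMab a b \<Longrightarrow> dd a b (x + y) = dd a b x + dd a b y"
    by (simp add: dCM_eq CM_add D_add CM_Nov) (auto simp: trunc_def intro!: ext)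
  show "\<And>x k. x \<in> CMab a b \<Longrightarrow> dd a b (\<lambda>c. k * x c) = (\<lambda>c. k * dd a b x c)"
    by (simp add: dCM_eq CM_scale D_scale CM_Nov) (auto simp: trunc_def intro!: ext)
  show "\<And>x. x \<in> CMab a b \<Longrightarrow> dd a b (dd a b x) = 0"
  proof -
    fix x assume x: "x \<in> CMab a b"
    have Dx: "D x \<in> Nv" using D_Nov CM_Nov x by blast
    have "dd a b (dd a b x) = dd a b (trunc f a b (D x))" using dCM_eq[OF x] by simp
    also have "\<dots> = trunc f a b (D (D x))"
      by (rule dCM_trunc[OF Dx D_bound[OF CM_Nov[OF x] CM_bound[OF x]]])
    also have "\<dots> = 0" using DD[OF CM_Nov[OF x]] by (simp add: trunc_def zero_fun_def)
    finally show "dd a b (dd a b x) = 0" .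
  qed
qed

lemma lt_CM: "a1 \<le> a2 \<Longrightarrow> x \<in> CMab a1 b \<Longrightarrow> lt a2 x \<in> CMab a2 b"
  unfolding CM_iff lt_def by auto

lemma lt_add: "lt a (x + y) = lt a x + lt a y"
  unfolding lt_def by (auto intro!: ext)

lemma lt_scale: "lt a (\<lambda>c. k * x c) = (\<lambda>c. k * lt a x c)"
  unfolding lt_def by (auto intro!: ext)

lemma lt_diff: "lt a (x - y) = lt a x - lt a y"
  unfolding lt_def by (auto intro!: ext)

lemma lt_lt: "a1 \<le> a2 \<Longrightarrow> lt a2 (lt a1 x) = lt a2 x"
  unfolding lt_def by (auto intro!: ext)

lemma lt_id: "x \<in> CMab a b \<Longrightarrow> a' \<le> a \<Longrightarrow> lt a' x = x"
  unfolding lt_def CM_iff by (force intro!: ext)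

lemma lt_trunc: "a1 \<le> a2 \<Longrightarrow> lt a2 (trunc f a1 b x) = trunc f a2 b x"
  unfolding lt_def trunc_def by (auto intro!: ext)

lemma lt_dd: assumes "a1 \<le> a2" "x \<in> CMab a1 b"
  shows "lt a2 (dd a1 b x) = dd a2 b (lt a2 x)"
proof -
  have xN: "x \<in> Nv" using CM_Nov assms(2) by blast
  have "dd a2 b (lt a2 x) = trunc f a2 b (D (lt a2 x))" by (rule dCM_eq[OF lt_CM[OF assms]])
  also have "\<dots> = trunc f a2 b (D x)" unfolding trunc_def using lt_local[OF xN] by (auto intro!: ext)
  also have "\<dots> = lt a2 (dd a1 b x)" using dCM_eq[OF assms(2)] lt_trunc[OF assms(1)] by simp
  finally show ?thesis by simp
qed

lemma dd_up: assumes "b1 \<le> b2" "x \<in> CMab a b1" shows "dd a b1 x = dd a b2 x"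
proof -
  have x2: "x \<in> CMab a b2" using CM_mono assms by blast
  have "upper_bound f (D x) b1" using D_bound CM_Nov CM_bound assms(2) by blast
  thus ?thesis using dCM_eq[OF assms(2)] dCM_eq[OF x2] trunc_bound_eq assms(1) by metis
qed

lemma Hp_eq: "(\<lambda>x c. if a2 \<le> f c then x c else 0) = lt a2"
  unfolding lt_def by (auto intro!: ext)

lemma Hp_hc: assumes "a1 \<le> a2" "z \<in> CMab a1 b"
  shows "Hp C f m b a2 a1 (hc a1 b z) = hc a2 b (lt a2 z)"
  unfolding Hp_def Hp_eq
  by (rule hmap_hcls[OF cplx_CM cplx_CM]) (auto simp: assms lt_CM[OF assms(1)] lt_add lt_dd[OF assms(1)])

lemma Hi_hc: assumes "b1 \<le> b2" "z \<in> CMab a b1"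
  shows "Hi C f m a b2 b1 (hc a b1 z) = hc a b2 z"
proof -
  have "hmap (CMab a b2) (dd a b2) id (hc a b1 z) = hc a b2 (id z)"
    by (rule hmap_hcls[OF cplx_CM cplx_CM]) (auto simp: assms CM_mono[OF order_refl assms(1)] dd_up[OF assms(1)])
  thus ?thesis unfolding Hi_def by simp
qed

lemma HM_carrier: "X \<in> vcarrier (HM a b) \<longleftrightarrow> (\<exists>z. z \<in> CMab a b \<and> dd a b z = 0 \<and> X = hc a b z)"
  unfolding HMab_def by (rule cplx.carrier_iff[OF cplx_CM])

lemma HM_carrierE: assumes "X \<in> vcarrier (HM a b)"
  obtains z where "z \<in> CMab a b" "dd a b z = 0" "X = hc a b z"
  using assms HM_carrier by blast

lemma HM_carrierI: "z \<in> CMab a b \<Longrightarrow> dd a b z = 0 \<Longrightarrow> hc a b z \<in> vcarrier (HM a b)"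
  using HM_carrier by blast

lemma HM_vadd: "z \<in> CMab a b \<Longrightarrow> dd a b z = 0 \<Longrightarrow> z' \<in> CMab a b \<Longrightarrow> dd a b z' = 0 \<Longrightarrow>
   vadd (HM a b) (hc a b z) (hc a b z') = hc a b (z + z')"
  unfolding HMab_def by (rule cplx.vadd_hcls[OF cplx_CM])

lemma HM_vscale: "z \<in> CMab a b \<Longrightarrow> dd a b z = 0 \<Longrightarrow>
   vscale (HM a b) k (hc a b z) = hc a b (\<lambda>c. k * z c)"
  unfolding HMab_def by (rule cplx.vscale_hcls[OF cplx_CM])

lemma hc_eq_iff: "z \<in> CMab a b \<Longrightarrow> z' \<in> CMab a b \<Longrightarrow>
   hc a b z = hc a b z' \<longleftrightarrow> (\<exists>y\<in>CMab a b. z = z' + dd a b y)"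
  by (rule cplx.hcls_eq_iff[OF cplx_CM])

lemma cyc_lt: "a1 \<le> a2 \<Longrightarrow> z \<in> CMab a1 b \<Longrightarrow> dd a1 b z = 0 \<Longrightarrow> dd a2 b (lt a2 z) = 0"
  using lt_dd[of a1 a2 z b] by (simp add: lt_def zero_fun_def)

lemma cyc_up: "b1 \<le> b2 \<Longrightarrow> z \<in> CMab a b1 \<Longrightarrow> dd a b1 z = 0 \<Longrightarrow> dd a b2 z = 0"
  using dd_up by metis

end

context floer begin

abbreviation "Hpp b a2 a1 \<equiv> Hp C f m b a2 a1"
abbreviation "Hii a b2 b1 \<equiv> Hi C f m a b2 b1"
abbreviation "IB b \<equiv> invlimB C f m b"
abbreviation "iB \<equiv> iotaB C f m"

lemma Hi_in: assumes "b1 \<le> b2" "X \<in> vcarrier (HM a b1)" shows "Hii a b2 b1 X \<in> vcarrier (HM a b2)"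
proof -
  obtain z where z: "z \<in> CMab a b1" "dd a b1 z = 0" "X = hc a b1 z" using HM_carrierE[OF assms(2)] .
  show ?thesis using Hi_hc[OF assms(1) z(1)] z HM_carrierI CM_mono[OF order_refl assms(1)] cyc_up[OF assms(1)]
    by metis
qed

lemma Hp_in: assumes "a1 \<le> a2" "X \<in> vcarrier (HM a1 b)" shows "Hpp b a2 a1 X \<in> vcarrier (HM a2 b)"
proof -
  obtain z where z: "z \<in> CMab a1 b" "dd a1 b z = 0" "X = hc a1 b z" using HM_carrierE[OF assms(2)] .
  show ?thesis using Hp_hc[OF assms(1) z(1)] z HM_carrierI lt_CM[OF assms(1)] cyc_lt[OF assms(1)]
    by metis
qed

lemma Hi_id: assumes "X \<in> vcarrier (HM a b)" shows "Hii a b b X = X"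
proof -
  obtain z where z: "z \<in> CMab a b" "dd a b z = 0" "X = hc a b z" using HM_carrierE[OF assms] .
  show ?thesis using Hi_hc[OF order_refl z(1)] z by simp
qed

lemma Hi_comp: assumes "b1 \<le> b2" "b2 \<le> b3" "X \<in> vcarrier (HM a b1)"
  shows "Hii a b3 b2 (Hii a b2 b1 X) = Hii a b3 b1 X"
proof -
  obtain z where z: "z \<in> CMab a b1" "dd a b1 z = 0" "X = hc a b1 z" using HM_carrierE[OF assms(3)] .
  have z2: "z \<in> CMab a b2" using CM_mono[OF order_refl assms(1) z(1)] .
  show ?thesis using Hi_hc[OF assms(1) z(1)] Hi_hc[OF assms(2) z2] Hi_hc[OF order_trans[OF assms(1,2)] z(1)] z(3)
    by simp
qed

lemma Hi_add: assumes "b1 \<le> b2" "X \<in> vcarrier (HM a b1)" "Y \<in> vcarrier (HM a b1)"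
  shows "Hii a b2 b1 (vadd (HM a b1) X Y) = vadd (HM a b2) (Hii a b2 b1 X) (Hii a b2 b1 Y)"
proof -
  obtain z where z: "z \<in> CMab a b1" "dd a b1 z = 0" "X = hc a b1 z" using HM_carrierE[OF assms(2)] .
  obtain w where w: "w \<in> CMab a b1" "dd a b1 w = 0" "Y = hc a b1 w" using HM_carrierE[OF assms(3)] .
  have z2: "z \<in> CMab a b2" "dd a b2 z = 0" using CM_mono[OF order_refl assms(1) z(1)] cyc_up[OF assms(1) z(1,2)] by auto
  have w2: "w \<in> CMab a b2" "dd a b2 w = 0" using CM_mono[OF order_refl assms(1) w(1)] cyc_up[OF assms(1) w(1,2)] by auto
  show ?thesis
    using HM_vadd[OF z(1,2) w(1,2)] HM_vadd[OF z2 w2] Hi_hc[OF assms(1) z(1)] Hi_hc[OF assms(1) w(1)]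
      Hi_hc[OF assms(1) CM_add[OF z(1) w(1)]] z(3) w(3) by simp
qed

lemma Hi_scale: assumes "b1 \<le> b2" "X \<in> vcarrier (HM a b1)"
  shows "Hii a b2 b1 (vscale (HM a b1) k X) = vscale (HM a b2) k (Hii a b2 b1 X)"
proof -
  obtain z where z: "z \<in> CMab a b1" "dd a b1 z = 0" "X = hc a b1 z" using HM_carrierE[OF assms(2)] .
  have z2: "z \<in> CMab a b2" "dd a b2 z = 0" using CM_mono[OF order_refl assms(1) z(1)] cyc_up[OF assms(1) z(1,2)] by auto
  show ?thesis
    using HM_vscale[OF z(1,2)] HM_vscale[OF z2] Hi_hc[OF assms(1) z(1)]
      Hi_hc[OF assms(1) CM_scale[OF z(1)]] z(3) by simp
qed

lemma Hp_add: assumes "a1 \<le> a2" "X \<in> vcarrier (HM a1 b)" "Y \<in> vcarrier (HM a1 b)"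
  shows "Hpp b a2 a1 (vadd (HM a1 b) X Y) = vadd (HM a2 b) (Hpp b a2 a1 X) (Hpp b a2 a1 Y)"
proof -
  obtain z where z: "z \<in> CMab a1 b" "dd a1 b z = 0" "X = hc a1 b z" using HM_carrierE[OF assms(2)] .
  obtain w where w: "w \<in> CMab a1 b" "dd a1 b w = 0" "Y = hc a1 b w" using HM_carrierE[OF assms(3)] .
  have z2: "lt a2 z \<in> CMab a2 b" "dd a2 b (lt a2 z) = 0" using lt_CM[OF assms(1) z(1)] cyc_lt[OF assms(1) z(1,2)] by auto
  have w2: "lt a2 w \<in> CMab a2 b" "dd a2 b (lt a2 w) = 0" using lt_CM[OF assms(1) w(1)] cyc_lt[OF assms(1) w(1,2)] by auto
  show ?thesis
    using HM_vadd[OF z(1,2) w(1,2)] HM_vadd[OF z2 w2] Hp_hc[OF assms(1) z(1)] Hp_hc[OF assms(1) w(1)]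
      Hp_hc[OF assms(1) CM_add[OF z(1) w(1)]] z(3) w(3) by (simp add: lt_add)
qed

lemma Hp_scale: assumes "a1 \<le> a2" "X \<in> vcarrier (HM a1 b)"
  shows "Hpp b a2 a1 (vscale (HM a1 b) k X) = vscale (HM a2 b) k (Hpp b a2 a1 X)"
proof -
  obtain z where z: "z \<in> CMab a1 b" "dd a1 b z = 0" "X = hc a1 b z" using HM_carrierE[OF assms(2)] .
  have z2: "lt a2 z \<in> CMab a2 b" "dd a2 b (lt a2 z) = 0" using lt_CM[OF assms(1) z(1)] cyc_lt[OF assms(1) z(1,2)] by auto
  show ?thesis
    using HM_vscale[OF z(1,2)] HM_vscale[OF z2] Hp_hc[OF assms(1) z(1)]
      Hp_hc[OF assms(1) CM_scale[OF z(1)]] z(3) by (simp add: lt_scale)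
qed

lemma HM_add_in: "X \<in> vcarrier (HM a b) \<Longrightarrow> Y \<in> vcarrier (HM a b) \<Longrightarrow> vadd (HM a b) X Y \<in> vcarrier (HM a b)"
proof -
  assume "X \<in> vcarrier (HM a b)" "Y \<in> vcarrier (HM a b)"
  then obtain z w where z: "z \<in> CMab a b" "dd a b z = 0" "X = hc a b z"
    and w: "w \<in> CMab a b" "dd a b w = 0" "Y = hc a b w" using HM_carrierE by metis
  have "dd a b (z + w) = 0" using cplx.d_add[OF cplx_CM z(1) w(1)] z(2) w(2) by simp
  thus ?thesis using HM_vadd[OF z(1,2) w(1,2)] z(3) w(3) HM_carrierI CM_add[OF z(1) w(1)] by simp
qed

lemma HM_scale_in: "X \<in> vcarrier (HM a b) \<Longrightarrow> vscale (HM a b) k X \<in> vcarrier (HM a b)"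
proof -
  assume "X \<in> vcarrier (HM a b)"
  then obtain z where z: "z \<in> CMab a b" "dd a b z = 0" "X = hc a b z" using HM_carrierE by blast
  have "dd a b (\<lambda>c. k * z c) = 0" using cplx.d_scale[OF cplx_CM z(1)] z(2) by (simp add: zero_fun_def)
  thus ?thesis using HM_vscale[OF z(1,2)] z(3) HM_carrierI CM_scale[OF z(1)] by simp
qed

lemma Hp_Hi: assumes "a1 \<le> a2" "b1 \<le> b2" "X \<in> vcarrier (HM a1 b1)"
  shows "Hpp b2 a2 a1 (Hii a1 b2 b1 X) = Hii a2 b2 b1 (Hpp b1 a2 a1 X)"
proof -
  obtain z where z: "z \<in> CMab a1 b1" "dd a1 b1 z = 0" "X = hc a1 b1 z" using HM_carrierE[OF assms(3)] .
  have z2: "z \<in> CMab a1 b2" using CM_mono[OF order_refl assms(2) z(1)] .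
  show ?thesis using Hi_hc[OF assms(2) z(1)] Hp_hc[OF assms(1) z2] Hp_hc[OF assms(1) z(1)]
      Hi_hc[OF assms(2) lt_CM[OF assms(1) z(1)]] z(3) by simp
qed

lemma dsys_HM: "dsys (\<lambda>b. HM a b) (Hii a)"
  by unfold_locales (auto simp: Hi_in Hi_id Hi_comp Hi_add Hi_scale HM_add_in HM_scale_in)

lemma IB_carrier: "x \<in> vcarrier (IB b) \<longleftrightarrow>
   (\<forall>a. x a \<in> vcarrier (HM a b)) \<and> (\<forall>a1 a2. a1 \<le> a2 \<longrightarrow> Hpp b a2 a1 (x a1) = x a2)"
  unfolding invlimB_def invlim_vs_def by simp

lemma IB_vadd: "vadd (IB b) x y = (\<lambda>a. vadd (HM a b) (x a) (y a))"
  unfolding invlimB_def invlim_vs_def by simp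

lemma IB_vscale: "vscale (IB b) k x = (\<lambda>a. vscale (HM a b) k (x a))"
  unfolding invlimB_def invlim_vs_def by simp

lemma iB_apply: "iB b2 b1 x = (\<lambda>a. Hii a b2 b1 (x a))"
  unfolding iotaB_def by simp

lemma dsys_B: "dsys IB iB"
proof
  fix b1 b2 :: real and x
  assume b: "b1 \<le> b2" and x: "x \<in> vcarrier (IB b1)"
  show "iB b2 b1 x \<in> vcarrier (IB b2)"
  proof -
    have xa: "\<And>a. x a \<in> vcarrier (HM a b1)" and xc: "\<And>a1 a2. a1 \<le> a2 \<Longrightarrow> Hpp b1 a2 a1 (x a1) = x a2"
      using x unfolding IB_carrier by auto
    show ?thesis unfolding IB_carrier iB_apply
    proof (intro conjI allI impI)
      fix a show "Hii a b2 b1 (x a) \<in> vcarrier (HM a b2)" using Hi_in[OF b xa] .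
    next
      fix a1 a2 :: real assume a: "a1 \<le> a2"
      show "Hpp b2 a2 a1 (Hii a1 b2 b1 (x a1)) = Hii a2 b2 b1 (x a2)"
        using Hp_Hi[OF a b xa] xc[OF a] by simp
    qed
  qed
next
  fix b x assume x: "x \<in> vcarrier (IB b)"
  show "iB b b x = x" unfolding iB_apply using x Hi_id unfolding IB_carrier by auto
next
  fix b1 b2 b3 :: real and x
  assume "b1 \<le> b2" "b2 \<le> b3" "x \<in> vcarrier (IB b1)"
  thus "iB b3 b2 (iB b2 b1 x) = iB b3 b1 x" unfolding iB_apply IB_carrier using Hi_comp by auto
next
  fix b1 b2 :: real and x y
  assume "b1 \<le> b2" "x \<in> vcarrier (IB b1)" "y \<in> vcarrier (IB b1)"
  thus "iB b2 b1 (vadd (IB b1) x y) = vadd (IB b2) (iB b2 b1 x) (iB b2 b1 y)"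
    unfolding iB_apply IB_carrier IB_vadd using Hi_add by auto
next
  fix b1 b2 :: real and x k
  assume "b1 \<le> b2" "x \<in> vcarrier (IB b1)"
  thus "iB b2 b1 (vscale (IB b1) k x) = vscale (IB b2) k (iB b2 b1 x)"
    unfolding iB_apply IB_carrier IB_vscale using Hi_scale by auto
next
  fix b x y assume "x \<in> vcarrier (IB b)" "y \<in> vcarrier (IB b)"
  thus "vadd (IB b) x y \<in> vcarrier (IB b)"
    unfolding IB_carrier IB_vadd using HM_add_in Hp_add by auto
next
  fix b x k assume "x \<in> vcarrier (IB b)"
  thus "vscale (IB b) k x \<in> vcarrier (IB b)"
    unfolding IB_carrier IB_vscale using HM_scale_in Hp_scale by auto
qed

end

definition aa :: "nat \<Rightarrow> real" where "aa n = - real n"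

lemma aa_mono: "n \<le> k \<Longrightarrow> aa k \<le> aa n"
  unfolding aa_def by simp

lemma aa_Suc: "aa (Suc n) \<le> aa n"
  unfolding aa_def by simp

lemma aa_below: "aa (nat \<lceil>- t\<rceil>) \<le> t"
  unfolding aa_def by linarith

context floer begin

definition seqlim :: "(nat \<Rightarrow> 'c \<Rightarrow> 'k) \<Rightarrow> 'c \<Rightarrow> 'k" where
  "seqlim w c = w (nat \<lceil>- f c\<rceil>) c"

lemma lt_chain:
  assumes "\<And>n. lt (aa n) (w (Suc n)) = w n" "n \<le> k"
  shows "lt (aa n) (w k) = w n"
proof -
  have "\<And>j. lt (aa n) (w (n + j)) = w n"
  proof -
    fix j show "lt (aa n) (w (n + j)) = w n"
    proof (induction j)
      case 0
      have "lt (aa n) (w n) = lt (aa n) (lt (aa n) (w (Suc n)))" using assms(1)[of n] by simp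
      also have "\<dots> = lt (aa n) (w (Suc n))" using lt_lt[of "aa n" "aa n"] by simp
      finally show ?case using assms(1)[of n] by simp
    next
      case (Suc j)
      have "lt (aa n) (w (n + Suc j)) = lt (aa n) (lt (aa (n + j)) (w (Suc (n + j))))"
        using lt_lt[OF aa_mono[of n "n + j"]] by simp
      also have "\<dots> = lt (aa n) (w (n + j))" using assms(1)[of "n + j"] by simp
      finally show ?case using Suc by simp
    qed
  qed
  from this[of "k - n"] assms(2) show ?thesis by simp
qed

context
  fixes w :: "nat \<Rightarrow> 'c \<Rightarrow> 'k" and Bw :: "nat \<Rightarrow> real"
  assumes w_in: "\<And>n. w n \<in> CMab (aa n) (Bw n)"
    and w_comp: "\<And>n. lt (aa n) (w (Suc n)) = w n"
begin

lemma seqlim_eq: assumes "aa n \<le> f c" shows "seqlim w c = w n c"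
proof -
  define N where "N = nat \<lceil>- f c\<rceil>"
  define k where "k = max n N"
  have aN: "aa N \<le> f c" unfolding N_def by (rule aa_below)
  have "w n c = lt (aa n) (w k) c" using lt_chain[OF w_comp, of n k] k_def by simp
  also have "\<dots> = w k c" using assms unfolding lt_def by simp
  also have "\<dots> = lt (aa N) (w k) c" using aN unfolding lt_def by simp
  also have "\<dots> = w N c" using lt_chain[OF w_comp, of N k] k_def by simp
  finally show ?thesis unfolding seqlim_def N_def by simp
qed

lemma lt_seqlim: "lt (aa n) (seqlim w) = w n"
proof (rule ext)
  fix c show "lt (aa n) (seqlim w) c = w n c"
  proof (cases "aa n \<le> f c")
    case True thus ?thesis using seqlim_eq unfolding lt_def by simp
  next
    case False thus ?thesis using w_in[of n] unfolding lt_def CM_iff by auto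
  qed
qed

lemma seqlim_Nov: "seqlim w \<in> Nv"
proof -
  have "\<And>c. seqlim w c \<noteq> 0 \<Longrightarrow> c \<in> C" unfolding seqlim_def using w_in CM_iff by blast
  moreover have "finite {c. seqlim w c \<noteq> 0 \<and> t < f c}" for t
  proof -
    define n where "n = nat \<lceil>- t\<rceil>"
    have "{c. seqlim w c \<noteq> 0 \<and> t < f c} \<subseteq> Cab C f (aa n) (Bw n)"
    proof
      fix c assume c: "c \<in> {c. seqlim w c \<noteq> 0 \<and> t < f c}"
      have "aa n \<le> f c" using aa_below[of t] c n_def by simp
      hence "w n c \<noteq> 0" using c seqlim_eq by simp
      thus "c \<in> Cab C f (aa n) (Bw n)" using w_in[of n] unfolding CM_def by auto
    qed
    thus ?thesis using finite_Cab finite_subset by blast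
  qed
  ultimately show ?thesis unfolding Nov_def by blast
qed

lemma D_seqlim: assumes "aa n \<le> f c'" shows "D (seqlim w) c' = D (w n) c'"
  using lt_local[OF seqlim_Nov assms] lt_seqlim by simp

lemma seqlim_bound: "(\<And>n. Bw n \<le> b) \<Longrightarrow> upper_bound f (seqlim w) b"
  unfolding upper_bound_def seqlim_def using w_in CM_iff by (meson order_trans)

end

lemma lift:
  fixes z :: "nat \<Rightarrow> 'c \<Rightarrow> 'k" and Bw :: "nat \<Rightarrow> real"
  assumes z_in: "\<And>n. z n \<in> CMab (aa n) (Bw n)" and z_cyc: "\<And>n. dd (aa n) (Bw n) (z n) = 0"
    and mono: "\<And>n. Bw n \<le> Bw (Suc n)"
    and step: "\<And>n. \<exists>y\<in>CMab (aa n) (Bw (Suc n)). lt (aa n) (z (Suc n)) = z n + dd (aa n) (Bw (Suc n)) y"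
  shows "\<exists>zz. \<forall>n. zz n \<in> CMab (aa n) (Bw n) \<and> dd (aa n) (Bw n) (zz n) = 0 \<and>
            (\<exists>y\<in>CMab (aa n) (Bw n). zz n = z n + dd (aa n) (Bw n) y) \<and> lt (aa n) (zz (Suc n)) = zz n"
proof -
  define Ys where "Ys n = (SOME y. y \<in> CMab (aa n) (Bw (Suc n)) \<and> lt (aa n) (z (Suc n)) = z n + dd (aa n) (Bw (Suc n)) y)" for n
  have Ys: "Ys n \<in> CMab (aa n) (Bw (Suc n))" "lt (aa n) (z (Suc n)) = z n + dd (aa n) (Bw (Suc n)) (Ys n)" for n
    using someI_ex[OF step[of n, unfolded Bex_def]] unfolding Ys_def by auto
  define Y where "Y = rec_nat 0 (\<lambda>n Yn. Yn - Ys n)"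
  have Y0: "Y 0 = 0" and YS: "Y (Suc n) = Y n - Ys n" for n unfolding Y_def by simp_all
  have Y_in: "Y n \<in> CMab (aa n) (Bw n)" for n
  proof (induction n)
    case 0 show ?case unfolding Y0 by (rule CM_zero)
  next
    case (Suc n)
    have "Y n \<in> CMab (aa (Suc n)) (Bw (Suc n))" using CM_mono[OF aa_Suc mono Suc] .
    moreover have "Ys n \<in> CMab (aa (Suc n)) (Bw (Suc n))" using CM_mono[OF aa_Suc order_refl Ys(1)] .
    ultimately show ?case unfolding YS by (rule CM_diff)
  qed
  define zz where "zz n = z n + dd (aa n) (Bw n) (Y n)" for n
  have "zz n \<in> CMab (aa n) (Bw n) \<and> dd (aa n) (Bw n) (zz n) = 0 \<and>
            (\<exists>y\<in>CMab (aa n) (Bw n). zz n = z n + dd (aa n) (Bw n) y) \<and> lt (aa n) (zz (Suc n)) = zz n" for n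
  proof (intro conjI)
    interpret K: cplx "CMab (aa n) (Bw n)" "dd (aa n) (Bw n)" by (rule cplx_CM)
    interpret K': cplx "CMab (aa n) (Bw (Suc n))" "dd (aa n) (Bw (Suc n))" by (rule cplx_CM)
    show "zz n \<in> CMab (aa n) (Bw n)" unfolding zz_def using z_in K.d_in[OF Y_in] CM_add by blast
    show "dd (aa n) (Bw n) (zz n) = 0" unfolding zz_def
      using K.d_add[OF z_in K.d_in[OF Y_in]] z_cyc K.dd[OF Y_in] by simp
    show "\<exists>y\<in>CMab (aa n) (Bw n). zz n = z n + dd (aa n) (Bw n) y" unfolding zz_def using Y_in by blast
    define B' where "B' = Bw (Suc n)"
    have Yn': "Y n \<in> CMab (aa n) B'" using CM_mono[OF order_refl mono Y_in] B'_def by simp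
    have Ys': "Ys n \<in> CMab (aa n) B'" using Ys(1) B'_def by simp
    have diff1: "Y n - Ys n \<in> CMab (aa (Suc n)) B'" using CM_mono[OF aa_Suc order_refl CM_diff[OF Yn' Ys']] .
    have "lt (aa n) (zz (Suc n)) = lt (aa n) (z (Suc n)) + lt (aa n) (dd (aa (Suc n)) B' (Y n - Ys n))"
      unfolding zz_def YS B'_def lt_add by simp
    also have "\<dots> = z n + dd (aa n) B' (Ys n) + dd (aa n) B' (lt (aa n) (Y n - Ys n))"
      using Ys(2)[of n] lt_dd[OF aa_Suc diff1] B'_def by simp
    also have "\<dots> = z n + dd (aa n) B' (Ys n) + dd (aa n) B' (Y n - Ys n)"
      using lt_id[OF CM_diff[OF Yn' Ys'] order_refl] by simp
    also have "\<dots> = z n + dd (aa n) B' (Y n)"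
      using K'.d_diff[OF Yn'[unfolded B'_def] Ys'[unfolded B'_def]] B'_def by simp
    also have "\<dots> = zz n" unfolding zz_def B'_def using dd_up[OF mono Y_in] by simp
    finally show "lt (aa n) (zz (Suc n)) = zz n" .
  qed
  thus ?thesis by blast
qed

end

definition fscale :: "'b::field \<Rightarrow> ('a \<Rightarrow> 'b) \<Rightarrow> ('a \<Rightarrow> 'b)" where
  "fscale k x = (\<lambda>c. k * x c)"

lemma vs_fun: "vector_space (fscale :: 'b::field \<Rightarrow> ('a \<Rightarrow> 'b) \<Rightarrow> ('a \<Rightarrow> 'b))"
  by unfold_locales (auto simp: fscale_def algebra_simps intro!: ext)

interpretation fvs: vector_space "fscale :: 'b::field \<Rightarrow> ('a \<Rightarrow> 'b) \<Rightarrow> ('a \<Rightarrow> 'b)"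
  by (rule vs_fun)

lemma fvs_eq_sub:
  fixes U V W :: "('a \<Rightarrow> 'b::field) set"
  assumes U: "fvs.subspace U" and V: "fvs.subspace V" and UV: "U \<subseteq> V"
    and W: "finite W" "V \<subseteq> fvs.span W" and dimle: "fvs.dim V \<le> fvs.dim U"
  shows "U = V"
proof (rule ccontr)
  assume "U \<noteq> V"
  then obtain v where v: "v \<in> V" "v \<notin> U" using UV by blast
  obtain B where B: "B \<subseteq> U" "fvs.independent B" "U \<subseteq> fvs.span B" "card B = fvs.dim U"
    using fvs.basis_exists by blast
  obtain B' where B': "B' \<subseteq> V" "fvs.independent B'" "V \<subseteq> fvs.span B'" "card B' = fvs.dim V"
    using fvs.basis_exists by blast
  have finB: "finite B" using fvs.independent_span_bound[OF W(1) B(2)] B(1) UV W(2) by blast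
  have finB': "finite B'" using fvs.independent_span_bound[OF W(1) B'(2)] B'(1) W(2) by blast
  have spB: "fvs.span B \<subseteq> U" using fvs.span_minimal[OF B(1) U] .
  have "v \<notin> fvs.span B" using spB v(2) by blast
  hence ind: "fvs.independent (insert v B)" using fvs.independent_insertI B(2) by blast
  have "insert v B \<subseteq> fvs.span B'" using B'(3) v(1) B(1) UV by blast
  hence "card (insert v B) \<le> card B'" using fvs.independent_span_bound[OF finB' ind] by blast
  moreover have "card (insert v B) = Suc (card B)" using finB v(2) B(1) by (metis card_insert_disjoint subsetD)
  ultimately show False using B(4) B'(4) dimle by simp
qed

lemma fvs_stab:
  fixes V :: "nat \<Rightarrow> ('a \<Rightarrow> 'b::field) set"
  assumes sub: "\<And>k. fvs.subspace (V k)" and anti: "\<And>k. V (Suc k) \<subseteq> V k"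
    and W: "finite W" "\<And>k. V k \<subseteq> fvs.span W"
  shows "\<exists>K. \<forall>k\<ge>K. V k = V K"
proof -
  define d where "d k = fvs.dim (V k)" for k
  define N where "N = (LEAST x. x \<in> range d)"
  have "N \<in> range d" unfolding N_def by (rule LeastI[of _ "d 0"]) simp
  then obtain K where K: "d K = N" by auto
  have Kmin: "d K \<le> d k" for k unfolding K N_def by (rule Least_le) simp
  have "V k = V K" if "k \<ge> K" for k
  proof -
    have sub': "V k \<subseteq> V K" using lift_Suc_antimono_le[of V, OF anti that] .
    show ?thesis by (rule fvs_eq_sub[OF sub sub sub' W(1) W(2)]) (use Kmin d_def in auto)
  qed
  thus ?thesis by blast
qed

definition delta :: "'a \<Rightarrow> 'a \<Rightarrow> 'b::field" where "delta c = (\<lambda>x. if x = c then 1 else 0)"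

lemma in_span_delta:
  fixes x :: "'a \<Rightarrow> 'b::field"
  assumes "finite F" "\<And>c. x c \<noteq> 0 \<Longrightarrow> c \<in> F"
  shows "x \<in> fvs.span (delta ` F)"
proof -
  have "x = (\<Sum>c\<in>F. fscale (x c) (delta c))"
  proof (rule ext)
    fix t
    have "(\<Sum>c\<in>F. fscale (x c) (delta c)) t = (\<Sum>c\<in>F. x c * delta c t)"
      unfolding fscale_def by (rule sum_fun_apply[OF assms(1)])
    also have "\<dots> = (if t \<in> F then x t else 0)"
      unfolding delta_def by (simp add: if_distrib cong: if_cong) (simp add: assms(1))
    also have "\<dots> = x t" using assms(2) by auto
    finally show "x t = (\<Sum>c\<in>F. fscale (x c) (delta c)) t" by simp
  qed
  also have "\<dots> \<in> fvs.span (delta ` F)"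
    by (rule fvs.span_sum) (auto intro: fvs.span_scale fvs.span_base)
  finally show ?thesis .
qed


context floer begin

lemma mittag:
  fixes \<zeta> :: "'c \<Rightarrow> 'k" and B :: real
  assumes zN: "\<zeta> \<in> Nv" and zb: "upper_bound f \<zeta> B"
    and bd: "\<And>a. \<exists>y\<in>CMab a B. trunc f a B \<zeta> = dd a B y"
  shows "\<exists>\<omega>\<in>Nv. \<zeta> = D \<omega>"
proof -
  define S where "S n = {y \<in> CMab (aa n) B. dd (aa n) B y = trunc f (aa n) B \<zeta>}" for n
  define Z where "Z n = {y \<in> CMab (aa n) B. dd (aa n) B y = 0}" for n
  have S_ne: "\<exists>y. y \<in> S n" for n using bd[of "aa n"] unfolding S_def by auto
  have S_lt: "lt (aa n) y \<in> S n" if "n \<le> k" "y \<in> S k" for n k y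
  proof -
    have a: "aa k \<le> aa n" using aa_mono that(1) .
    have y: "y \<in> CMab (aa k) B" "dd (aa k) B y = trunc f (aa k) B \<zeta>" using that(2) S_def by auto
    have "dd (aa n) B (lt (aa n) y) = lt (aa n) (dd (aa k) B y)" using lt_dd[OF a y(1)] by simp
    also have "\<dots> = trunc f (aa n) B \<zeta>" using y(2) lt_trunc[OF a] by simp
    finally show ?thesis unfolding S_def using lt_CM[OF a y(1)] by simp
  qed
  have Z_lt: "lt (aa n) y \<in> Z n" if "n \<le> k" "y \<in> Z k" for n k y
  proof -
    have a: "aa k \<le> aa n" using aa_mono that(1) .
    have y: "y \<in> CMab (aa k) B" "dd (aa k) B y = 0" using that(2) Z_def by auto
    show ?thesis unfolding Z_def using lt_CM[OF a y(1)] cyc_lt[OF a y] by simp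
  qed
  have S_diff: "y - y' \<in> Z k" if "y \<in> S k" "y' \<in> S k" for y y' k
    using that cplx.d_diff[OF cplx_CM] CM_diff unfolding S_def Z_def by auto
  have SZ_add: "y + z \<in> S k" if "y \<in> S k" "z \<in> Z k" for y z k
    using that cplx.d_add[OF cplx_CM] CM_add unfolding S_def Z_def by auto
  have Z_zero: "0 \<in> Z k" for k unfolding Z_def using CM_zero cplx.d_zero[OF cplx_CM] by auto
  have Z_add: "y + z \<in> Z k" if "y \<in> Z k" "z \<in> Z k" for y z k
    using that cplx.d_add[OF cplx_CM] CM_add unfolding Z_def by auto
  have Z_scale: "fscale c y \<in> Z k" if "y \<in> Z k" for y c k
    using that cplx.d_scale[OF cplx_CM] CM_scale unfolding Z_def fscale_def by (auto simp: zero_fun_def)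
  define V where "V n j = lt (aa n) ` Z (n + j)" for n j
  define P where "P n j = lt (aa n) ` S (n + j)" for n j
  have lt_zero: "lt a 0 = 0" for a unfolding lt_def by (auto intro!: ext)
  have stab: "\<exists>K. \<forall>j\<ge>K. V n j = V n K" for n
  proof (rule fvs_stab)
    show "fvs.subspace (V n j)" for j
      unfolding fvs.subspace_def V_def
    proof (intro conjI ballI allI)
      show "0 \<in> lt (aa n) ` Z (n + j)" using Z_zero lt_zero by (metis image_eqI)
    next
      fix x y assume "x \<in> lt (aa n) ` Z (n + j)" "y \<in> lt (aa n) ` Z (n + j)"
      then obtain x' y' where "x' \<in> Z (n + j)" "y' \<in> Z (n + j)" "x = lt (aa n) x'" "y = lt (aa n) y'" by auto
      thus "x + y \<in> lt (aa n) ` Z (n + j)" using Z_add lt_add by (metis image_eqI)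
    next
      fix c x assume "x \<in> lt (aa n) ` Z (n + j)"
      then obtain x' where "x' \<in> Z (n + j)" "x = lt (aa n) x'" by auto
      thus "fscale c x \<in> lt (aa n) ` Z (n + j)" using Z_scale lt_scale unfolding fscale_def by (metis image_eqI)
    qed
    show "V n (Suc j) \<subseteq> V n j" for j
    proof
      fix x assume "x \<in> V n (Suc j)"
      then obtain z where z: "z \<in> Z (n + Suc j)" "x = lt (aa n) z" unfolding V_def by auto
      have "x = lt (aa n) (lt (aa (n + j)) z)" using z(2) lt_lt[OF aa_mono[of n "n + j"]] by simp
      moreover have "lt (aa (n + j)) z \<in> Z (n + j)" using Z_lt[OF _ z(1)] by simp
      ultimately show "x \<in> V n j" unfolding V_def by blast
    qed
    show "finite (delta ` Cab C f (aa n) B)" using finite_Cab by simp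
    show "V n j \<subseteq> fvs.span (delta ` Cab C f (aa n) B)" for j
    proof
      fix x assume "x \<in> V n j"
      then obtain z where z: "z \<in> Z (n + j)" "x = lt (aa n) z" unfolding V_def by auto
      have "x \<in> CMab (aa n) B" using z lt_CM[OF aa_mono[of n "n + j"]] unfolding Z_def by auto
      thus "x \<in> fvs.span (delta ` Cab C f (aa n) B)"
        by (intro in_span_delta[OF finite_Cab]) (auto simp: CM_def)
    qed
  qed
  obtain K where K: "\<And>n j. j \<ge> K n \<Longrightarrow> V n j = V n (K n)" using stab by metis
  have Pstab: "P n j = P n (K n)" if "j \<ge> K n" for n j
  proof
    show "P n j \<subseteq> P n (K n)"
    proof
      fix p assume "p \<in> P n j"
      then obtain s where s: "s \<in> S (n + j)" "p = lt (aa n) s" unfolding P_def by auto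
      have "lt (aa (n + K n)) s \<in> S (n + K n)" using S_lt[OF _ s(1)] that by simp
      moreover have "p = lt (aa n) (lt (aa (n + K n)) s)" using s(2) lt_lt[OF aa_mono[of n "n + K n"]] by simp
      ultimately show "p \<in> P n (K n)" unfolding P_def by blast
    qed
    show "P n (K n) \<subseteq> P n j"
    proof
      fix p assume "p \<in> P n (K n)"
      then obtain s where s: "s \<in> S (n + K n)" "p = lt (aa n) s" unfolding P_def by auto
      obtain s' where s': "s' \<in> S (n + j)" using S_ne by blast
      define s'' where "s'' = lt (aa (n + K n)) s'"
      have s'': "s'' \<in> S (n + K n)" unfolding s''_def using S_lt[OF _ s'] that by simp
      have "lt (aa n) (s - s'') \<in> V n (K n)" unfolding V_def using S_diff[OF s(1) s''] by blast
      hence "lt (aa n) (s - s'') \<in> V n j" using K[OF that] by simp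
      then obtain z' where z': "z' \<in> Z (n + j)" "lt (aa n) (s - s'') = lt (aa n) z'" unfolding V_def by auto
      have "lt (aa n) s'' = lt (aa n) s'" unfolding s''_def using lt_lt[OF aa_mono[of n "n + K n"]] by simp
      hence "p = lt (aa n) (s' + z')" using s(2) z'(2) unfolding lt_add lt_diff by (simp add: algebra_simps)
      moreover have "s' + z' \<in> S (n + j)" using SZ_add[OF s' z'(1)] .
      ultimately show "p \<in> P n j" unfolding P_def by blast
    qed
  qed
  define T where "T n = P n (K n)" for n
  have T_ne: "\<exists>t. t \<in> T n" for n using S_ne unfolding T_def P_def by blast
  have T_S: "T n \<subseteq> S n" for n unfolding T_def P_def using S_lt[OF le_add1[of n "K n"]] by blast
  have T_ext: "\<exists>t'\<in>T (Suc n). lt (aa n) t' = t" if "t \<in> T n" for n t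
  proof -
    define J where "J = max (K n) (Suc (K (Suc n)))"
    have J1: "J \<ge> K n" and J2: "J - 1 \<ge> K (Suc n)" and J3: "Suc n + (J - 1) = n + J" unfolding J_def by auto
    have "t \<in> P n J" using that Pstab[OF J1] unfolding T_def by simp
    then obtain s where s: "s \<in> S (n + J)" "t = lt (aa n) s" unfolding P_def by auto
    have "lt (aa (Suc n)) s \<in> P (Suc n) (J - 1)" unfolding P_def using J3 s(1) by (metis image_eqI)
    hence "lt (aa (Suc n)) s \<in> T (Suc n)" using Pstab[OF J2] unfolding T_def by simp
    moreover have "lt (aa n) (lt (aa (Suc n)) s) = t" using s(2) lt_lt[OF aa_Suc] by simp
    ultimately show ?thesis by blast
  qed
  define tt where "tt = rec_nat (SOME t. t \<in> T 0) (\<lambda>n t. SOME t'. t' \<in> T (Suc n) \<and> lt (aa n) t' = t)"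
  have tt0: "tt 0 = (SOME t. t \<in> T 0)" and ttS: "tt (Suc n) = (SOME t'. t' \<in> T (Suc n) \<and> lt (aa n) t' = tt n)" for n
    unfolding tt_def by simp_all
  have tt_T: "tt n \<in> T n" for n
  proof (induction n)
    case 0 show ?case unfolding tt0 using T_ne by (metis someI)
  next
    case (Suc n)
    show ?case unfolding ttS using someI_ex[OF T_ext[OF Suc, unfolded Bex_def]] by blast
  qed
  have tt_comp: "lt (aa n) (tt (Suc n)) = tt n" for n
    unfolding ttS using someI_ex[OF T_ext[OF tt_T, unfolded Bex_def]] by blast
  have tt_S: "tt n \<in> S n" for n using tt_T T_S by blast
  have tt_in: "tt n \<in> CMab (aa n) ((\<lambda>_. B) n)" for n using tt_S unfolding S_def by auto
  define \<omega> where "\<omega> = seqlim tt"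
  have oN: "\<omega> \<in> Nv" unfolding \<omega>_def by (rule seqlim_Nov[OF tt_in tt_comp])
  have "\<zeta> = D \<omega>"
  proof (rule ext)
    fix c'
    show "\<zeta> c' = D \<omega> c'"
    proof (cases "c' \<in> C")
      case False thus ?thesis using nov_supp[OF zN] D_notC by metis
    next
      case True
      define n where "n = nat \<lceil>- f c'\<rceil>"
      have an: "aa n \<le> f c'" unfolding n_def by (rule aa_below)
      have e: "D \<omega> c' = D (tt n) c'" unfolding \<omega>_def by (rule D_seqlim[OF tt_in tt_comp an])
      have ttn: "tt n \<in> CMab (aa n) B" "dd (aa n) B (tt n) = trunc f (aa n) B \<zeta>" using tt_S S_def by auto
      show ?thesis
      proof (cases "f c' \<le> B")
        case True
        have "D (tt n) c' = dd (aa n) B (tt n) c'" using dCM_eq[OF ttn(1)] an True unfolding trunc_def by simp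
        thus ?thesis using e ttn(2) an True unfolding trunc_def by simp
      next
        case False
        have "D (tt n) c' = 0" using D_bound[OF CM_Nov[OF ttn(1)] CM_bound[OF ttn(1)]] False
          unfolding upper_bound_def by force
        moreover have "\<zeta> c' = 0" using zb False unfolding upper_bound_def by force
        ultimately show ?thesis using e by simp
      qed
    qed
  qed
  thus ?thesis using oN by blast
qed

end

context floer begin

abbreviation "dA a \<equiv> dcls (\<lambda>b'. HM a b') (Hi C f m a)"
abbreviation "Rb \<xi> b \<equiv> (\<lambda>a. hc a b (trunc f a b \<xi>))"

lemma trunc_add: "trunc f a b (x + y) = trunc f a b x + trunc f a b y"
  unfolding trunc_def by (auto intro!: ext)
lemma trunc_scale: "trunc f a b (\<lambda>c. k * x c) = (\<lambda>c. k * trunc f a b x c)"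
  unfolding trunc_def by (auto intro!: ext)
lemma trunc_diff: "trunc f a b (x - y) = trunc f a b x - trunc f a b y"
  unfolding trunc_def by (auto intro!: ext)
lemma trunc_lt: "a' \<le> a \<Longrightarrow> trunc f a b (lt a' x) = trunc f a b x"
  unfolding trunc_def lt_def by (auto intro!: ext)
lemma trunc_eq_lt: "upper_bound f x b \<Longrightarrow> trunc f a b x = lt a x"
  unfolding trunc_def lt_def upper_bound_def by (force intro!: ext)
lemma lt_bound: "upper_bound f x b \<Longrightarrow> upper_bound f (lt a x) b"
  unfolding lt_def upper_bound_def by auto
lemma bound_mono: "upper_bound f x b \<Longrightarrow> b \<le> B \<Longrightarrow> upper_bound f x B"
  unfolding upper_bound_def by force

lemma trunc_in: "x \<in> Nv \<Longrightarrow> trunc f a b x \<in> CMab a b"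
  by (rule trunc_CM) (auto dest: nov_supp)

lemma trunc_cyc: "x \<in> Nv \<Longrightarrow> D x = 0 \<Longrightarrow> upper_bound f x b \<Longrightarrow> dd a b (trunc f a b x) = 0"
proof -
  assume a: "x \<in> Nv" "D x = 0" "upper_bound f x b"
  have "dd a b (trunc f a b x) = trunc f a b (D x)" by (rule dCM_trunc[OF a(1,3)])
  also have "\<dots> = 0" unfolding a(2) trunc_def by (auto intro!: ext)
  finally show ?thesis .
qed

lemma Rb_in: assumes "\<xi> \<in> Nv" "D \<xi> = 0" "upper_bound f \<xi> b" shows "Rb \<xi> b \<in> vcarrier (IB b)"
  unfolding IB_carrier
proof (intro conjI allI impI)
  fix a show "hc a b (trunc f a b \<xi>) \<in> vcarrier (HM a b)"
    using HM_carrierI trunc_in trunc_cyc assms by blast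
next
  fix a1 a2 :: real assume a: "a1 \<le> a2"
  show "Hpp b a2 a1 (hc a1 b (trunc f a1 b \<xi>)) = hc a2 b (trunc f a2 b \<xi>)"
    using Hp_hc[OF a trunc_in[OF assms(1)]] lt_trunc[OF a] by simp
qed

lemma iB_Rb: assumes "upper_bound f \<xi> b" "b \<le> B" "\<xi> \<in> Nv" shows "iB B b (Rb \<xi> b) = Rb \<xi> B"
  unfolding iB_apply using Hi_hc[OF assms(2) trunc_in[OF assms(3)]] trunc_bound_eq[OF assms(1,2)] by simp

lemma rhobar_push: assumes "\<xi> \<in> Nv" "D \<xi> = 0" "upper_bound f \<xi> b" "b \<le> B"
  shows "rhobar_cyc C f m \<xi> b = rhobar_cyc C f m \<xi> B"
proof -
  have "dcls IB iB B (iB B b (Rb \<xi> b)) = dcls IB iB b (Rb \<xi> b)"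
    by (rule dsys.dcls_push[OF dsys_B Rb_in[OF assms(1-3)] assms(4)])
  thus ?thesis unfolding rhobar_cyc_def using iB_Rb[OF assms(3,4,1)] by simp
qed

lemma rhounder_push: assumes "\<xi> \<in> Nv" "D \<xi> = 0" "upper_bound f \<xi> b" "b \<le> B"
  shows "rhounder_cyc C f m \<xi> b = rhounder_cyc C f m \<xi> B"
proof (rule ext)
  fix a
  have x: "hc a b (trunc f a b \<xi>) \<in> vcarrier (HM a b)" using HM_carrierI trunc_in trunc_cyc assms by blast
  have "dA a B (Hii a B b (hc a b (trunc f a b \<xi>))) = dA a b (hc a b (trunc f a b \<xi>))"
    by (rule dsys.dcls_push[OF dsys_HM x assms(4)])
  thus "rhounder_cyc C f m \<xi> b a = rhounder_cyc C f m \<xi> B a"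
    unfolding rhounder_cyc_def using Hi_hc[OF assms(4) trunc_in[OF assms(1)]] trunc_bound_eq[OF assms(3,4)] by simp
qed

lemma hcNv_eq: assumes "\<xi> \<in> Nv" "\<xi>' \<in> Nv"
  shows "hcls Nv D \<xi> = hcls Nv D \<xi>' \<longleftrightarrow> (\<exists>y\<in>Nv. \<xi> = \<xi>' + D y)"
  by (rule cplx.hcls_eq_iff[OF cplx_Nov assms])

lemma Rb_homol: assumes "\<xi> \<in> Nv" "\<xi>' \<in> Nv" "\<eta> \<in> Nv" "\<xi> = \<xi>' + D \<eta>"
    "upper_bound f \<xi> B" "upper_bound f \<xi>' B" "upper_bound f \<eta> B"
  shows "hc a B (trunc f a B \<xi>) = hc a B (trunc f a B \<xi>')"
proof -
  have "trunc f a B \<xi> = trunc f a B \<xi>' + dd a B (trunc f a B \<eta>)"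
    using assms(4) trunc_add dCM_trunc[OF assms(3,7)] by simp
  thus ?thesis using hc_eq_iff[OF trunc_in[OF assms(1)] trunc_in[OF assms(2)]] trunc_in[OF assms(3)] by blast
qed

lemma P1: assumes "\<xi> \<in> Nv" "\<xi>' \<in> Nv" "D \<xi> = 0" "D \<xi>' = 0" "hcls Nv D \<xi> = hcls Nv D \<xi>'"
    "upper_bound f \<xi> b" "upper_bound f \<xi>' b'"
  shows "rhobar_cyc C f m \<xi> b = rhobar_cyc C f m \<xi>' b' \<and> rhounder_cyc C f m \<xi> b = rhounder_cyc C f m \<xi>' b'"
proof -
  obtain \<eta> where eta: "\<eta> \<in> Nv" "\<xi> = \<xi>' + D \<eta>" using hcNv_eq[OF assms(1,2)] assms(5) by blast
  obtain B0 where B0: "upper_bound f \<eta> B0" using nov_bounded[OF eta(1)] by blast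
  define B where "B = max (max b b') B0"
  have bB: "b \<le> B" "b' \<le> B" "B0 \<le> B" unfolding B_def by auto
  have u1: "upper_bound f \<xi> B" using bound_mono[OF assms(6) bB(1)] .
  have u2: "upper_bound f \<xi>' B" using bound_mono[OF assms(7) bB(2)] .
  have u3: "upper_bound f \<eta> B" using bound_mono[OF B0 bB(3)] .
  have R: "Rb \<xi> B = Rb \<xi>' B" using Rb_homol[OF assms(1,2) eta u1 u2 u3] by (intro ext)
  have "rhobar_cyc C f m \<xi> b = rhobar_cyc C f m \<xi> B" by (rule rhobar_push[OF assms(1,3,6) bB(1)])
  also have "\<dots> = rhobar_cyc C f m \<xi>' B" unfolding rhobar_cyc_def using R by simp
  also have "\<dots> = rhobar_cyc C f m \<xi>' b'" by (rule rhobar_push[OF assms(2,4,7) bB(2), symmetric])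
  finally have 1: "rhobar_cyc C f m \<xi> b = rhobar_cyc C f m \<xi>' b'" .
  have "rhounder_cyc C f m \<xi> b = rhounder_cyc C f m \<xi> B" by (rule rhounder_push[OF assms(1,3,6) bB(1)])
  also have "\<dots> = rhounder_cyc C f m \<xi>' B" unfolding rhounder_cyc_def using R by metis
  also have "\<dots> = rhounder_cyc C f m \<xi>' b'" by (rule rhounder_push[OF assms(2,4,7) bB(2), symmetric])
  finally show ?thesis using 1 by simp
qed

lemma Nv_carrier: "X \<in> vcarrier (HMnov C f m) \<longleftrightarrow> (\<exists>\<xi>. \<xi> \<in> Nv \<and> D \<xi> = 0 \<and> X = hcls Nv D \<xi>)"
  unfolding HMnov_def by (rule cplx.carrier_iff[OF cplx_Nov])

lemma pick_cyc: assumes "\<xi> \<in> Nv" "D \<xi> = 0"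
  shows "pick (hcls Nv D \<xi>) \<in> Nv" "D (pick (hcls Nv D \<xi>)) = 0" "hcls Nv D (pick (hcls Nv D \<xi>)) = hcls Nv D \<xi>"
  using cplx.pick_hcls_props[OF cplx_Nov assms] by auto

lemma rho_hcls: assumes "\<xi> \<in> Nv" "D \<xi> = 0" "upper_bound f \<xi> b"
  shows "rhobar C f m (hcls Nv D \<xi>) = rhobar_cyc C f m \<xi> b"
    "rhounder C f m (hcls Nv D \<xi>) = rhounder_cyc C f m \<xi> b"
proof -
  define \<xi>' where "\<xi>' = pick (hcls Nv D \<xi>)"
  have p: "\<xi>' \<in> Nv" "D \<xi>' = 0" "hcls Nv D \<xi>' = hcls Nv D \<xi>" using pick_cyc[OF assms(1,2)] \<xi>'_def by auto
  define b' where "b' = (SOME b. upper_bound f \<xi>' b)"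
  have b': "upper_bound f \<xi>' b'" unfolding b'_def using nov_bounded[OF p(1)] by (metis someI)
  have e: "rhobar C f m (hcls Nv D \<xi>) = rhobar_cyc C f m \<xi>' b'"
    "rhounder C f m (hcls Nv D \<xi>) = rhounder_cyc C f m \<xi>' b'"
    unfolding rhobar_def rhounder_def \<xi>'_def b'_def by simp_all
  show "rhobar C f m (hcls Nv D \<xi>) = rhobar_cyc C f m \<xi> b"
    "rhounder C f m (hcls Nv D \<xi>) = rhounder_cyc C f m \<xi> b"
    using P1[OF p(1) assms(1) p(2) assms(2) p(3) b' assms(3)] e by auto
qed

end

context floer begin

lemma HMbar_carrier: "Dd \<in> vcarrier (HMbar C f m) \<longleftrightarrow> (\<exists>b x. x \<in> vcarrier (IB b) \<and> Dd = dcls IB iB b x)"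
  unfolding HMbar_def by (rule dsys.dlim_carrier[OF dsys_B])

lemma dlimA_carrier: "X \<in> vcarrier (dlimA C f m a) \<longleftrightarrow> (\<exists>b x. x \<in> vcarrier (HM a b) \<and> X = dA a b x)"
  unfolding dlimA_def by (rule dsys.dlim_carrier[OF dsys_HM])

lemma HMunder_carrier: "U \<in> vcarrier (HMunder C f m) \<longleftrightarrow>
   (\<forall>a. U a \<in> vcarrier (dlimA C f m a)) \<and> (\<forall>a1 a2. a1 \<le> a2 \<longrightarrow> piA C f m a2 a1 (U a1) = U a2)"
  unfolding HMunder_def invlim_vs_def by simp

lemma piA_dcls: assumes "a1 \<le> a2" "X \<in> vcarrier (HM a1 b)"
  shows "piA C f m a2 a1 (dA a1 b X) = dA a2 b (Hpp b a2 a1 X)"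
  unfolding piA_def
  by (rule dlim_map_dcls[OF dsys_HM dsys_HM _ _ assms(2)]) (auto simp: Hp_in[OF assms(1)] Hp_Hi[OF assms(1)])

lemma kappa_rep_eq: assumes x: "x \<in> vcarrier (IB b)" and p: "p \<in> dcls IB iB b x"
  shows "kappa_rep C f m p = (\<lambda>a. dA a b (x a))"
proof -
  obtain b' x' where p': "p = (b', x')" by (cases p)
  have x': "x' \<in> vcarrier (IB b')" and r: "dsys.rel iB b x b' x'"
    using p dsys.dcls_iff[OF dsys_B] p' by auto
  obtain B where B: "b \<le> B" "b' \<le> B" "iB B b x = iB B b' x'" using r dsys.rel_def[OF dsys_B] by auto
  show ?thesis
  proof (rule ext)
    fix a
    have xa: "x a \<in> vcarrier (HM a b)" "x' a \<in> vcarrier (HM a b')" using x x' IB_carrier by auto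
    have "Hii a B b (x a) = Hii a B b' (x' a)" using fun_cong[OF B(3), of a] iB_apply by simp
    hence "dA a b' (x' a) = dA a b (x a)"
      by (intro dsys.dcls_eqI[OF dsys_HM xa(2) xa(1) B(2) B(1)]) simp
    thus "kappa_rep C f m p a = dA a b (x a)" unfolding p' kappa_rep_def by simp
  qed
qed

lemma kappa_dcls: assumes x: "x \<in> vcarrier (IB b)"
  shows "kappa C f m (dcls IB iB b x) = (\<lambda>a. dA a b (x a))"
proof -
  have "pick (dcls IB iB b x) \<in> dcls IB iB b x"
    unfolding pick_def using dsys.dcls_mem[OF dsys_B x] by (metis someI)
  thus ?thesis unfolding kappa_def using kappa_rep_eq[OF x] by simp
qed

lemma P2: "\<forall>Dd\<in>vcarrier (HMbar C f m). \<forall>p\<in>Dd. \<forall>q\<in>Dd. kappa_rep C f m p = kappa_rep C f m q"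
proof (intro ballI)
  fix Dd p q assume Dd: "Dd \<in> vcarrier (HMbar C f m)" and pq: "p \<in> Dd" "q \<in> Dd"
  obtain b x where x: "x \<in> vcarrier (IB b)" "Dd = dcls IB iB b x" using Dd HMbar_carrier by blast
  show "kappa_rep C f m p = kappa_rep C f m q" using kappa_rep_eq[OF x(1)] pq x(2) by simp
qed

lemma kappa_in: assumes x: "x \<in> vcarrier (IB b)"
  shows "(\<lambda>a. dA a b (x a)) \<in> vcarrier (HMunder C f m)"
  unfolding HMunder_carrier
proof (intro conjI allI impI)
  have xa: "\<And>a. x a \<in> vcarrier (HM a b)" "\<And>a1 a2. a1 \<le> a2 \<Longrightarrow> Hpp b a2 a1 (x a1) = x a2"
    using x IB_carrier by auto
  fix a show "dA a b (x a) \<in> vcarrier (dlimA C f m a)" using dlimA_carrier xa(1) by blast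
next
  have xa: "\<And>a. x a \<in> vcarrier (HM a b)" "\<And>a1 a2. a1 \<le> a2 \<Longrightarrow> Hpp b a2 a1 (x a1) = x a2"
    using x IB_carrier by auto
  fix a1 a2 :: real assume a: "a1 \<le> a2"
  show "piA C f m a2 a1 (dA a1 b (x a1)) = dA a2 b (x a2)" using piA_dcls[OF a xa(1)] xa(2)[OF a] by simp
qed

lemma HMunder_vadd: "vadd (HMunder C f m) U V = (\<lambda>a. vadd (dlimA C f m a) (U a) (V a))"
  unfolding HMunder_def invlim_vs_def by simp
lemma HMunder_vscale: "vscale (HMunder C f m) k U = (\<lambda>a. vscale (dlimA C f m a) k (U a))"
  unfolding HMunder_def invlim_vs_def by simp

lemma P5: "lin_map (HMbar C f m) (HMunder C f m) (kappa C f m)"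
  unfolding lin_map_def
proof (intro conjI ballI allI)
  fix Dd assume "Dd \<in> vcarrier (HMbar C f m)"
  then obtain b x where x: "x \<in> vcarrier (IB b)" "Dd = dcls IB iB b x" using HMbar_carrier by blast
  show "kappa C f m Dd \<in> vcarrier (HMunder C f m)" using kappa_dcls[OF x(1)] kappa_in[OF x(1)] x(2) by simp
next
  fix D1 D2 assume "D1 \<in> vcarrier (HMbar C f m)" "D2 \<in> vcarrier (HMbar C f m)"
  then obtain b x b' y where x: "x \<in> vcarrier (IB b)" "D1 = dcls IB iB b x"
    and y: "y \<in> vcarrier (IB b')" "D2 = dcls IB iB b' y" using HMbar_carrier by metis
  define B where "B = max b b'"
  have B: "b \<le> B" "b' \<le> B" unfolding B_def by auto
  define z where "z = vadd (IB B) (iB B b x) (iB B b' y)"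
  have z: "z \<in> vcarrier (IB B)" unfolding z_def
    using dsys.g_add[OF dsys_B dsys.i_in[OF dsys_B B(1) x(1)] dsys.i_in[OF dsys_B B(2) y(1)]] .
  have sum: "vadd (HMbar C f m) D1 D2 = dcls IB iB B z"
    unfolding HMbar_def x(2) y(2) z_def by (rule dsys.dlim_vadd[OF dsys_B x(1) y(1) B])
  have xa: "\<And>a. x a \<in> vcarrier (HM a b)" using x IB_carrier by auto
  have ya: "\<And>a. y a \<in> vcarrier (HM a b')" using y IB_carrier by auto
  have L: "kappa C f m (vadd (HMbar C f m) D1 D2) = (\<lambda>a. dA a B (z a))" using sum kappa_dcls[OF z] by simp
  have R: "vadd (HMunder C f m) (kappa C f m D1) (kappa C f m D2) =
      (\<lambda>a. vadd (dlimA C f m a) (dA a b (x a)) (dA a b' (y a)))"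
    using x(2) y(2) kappa_dcls[OF x(1)] kappa_dcls[OF y(1)] HMunder_vadd by simp
  have M: "dA a B (z a) = vadd (dlimA C f m a) (dA a b (x a)) (dA a b' (y a))" for a
  proof -
    have "vadd (dlimA C f m a) (dA a b (x a)) (dA a b' (y a)) =
        dA a B (vadd (HM a B) (Hii a B b (x a)) (Hii a B b' (y a)))"
      unfolding dlimA_def by (rule dsys.dlim_vadd[OF dsys_HM xa ya B])
    thus ?thesis unfolding z_def IB_vadd iB_apply by simp
  qed
  show "kappa C f m (vadd (HMbar C f m) D1 D2) = vadd (HMunder C f m) (kappa C f m D1) (kappa C f m D2)"
    using L R M by simp
next
  fix k Dd assume "Dd \<in> vcarrier (HMbar C f m)"
  then obtain b x where x: "x \<in> vcarrier (IB b)" "Dd = dcls IB iB b x" using HMbar_carrier by blast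
  define z where "z = vscale (IB b) k x"
  have z: "z \<in> vcarrier (IB b)" unfolding z_def using dsys.g_scale[OF dsys_B x(1)] .
  have sc: "vscale (HMbar C f m) k Dd = dcls IB iB b z"
    unfolding HMbar_def x(2) z_def by (rule dsys.dlim_vscale[OF dsys_B x(1)])
  have xa: "\<And>a. x a \<in> vcarrier (HM a b)" using x IB_carrier by auto
  have L: "kappa C f m (vscale (HMbar C f m) k Dd) = (\<lambda>a. dA a b (z a))" using sc kappa_dcls[OF z] by simp
  have R: "vscale (HMunder C f m) k (kappa C f m Dd) = (\<lambda>a. vscale (dlimA C f m a) k (dA a b (x a)))"
    using x(2) kappa_dcls[OF x(1)] HMunder_vscale by simp
  have M: "dA a b (z a) = vscale (dlimA C f m a) k (dA a b (x a))" for a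
  proof -
    have "vscale (dlimA C f m a) k (dA a b (x a)) = dA a b (vscale (HM a b) k (x a))"
      unfolding dlimA_def by (rule dsys.dlim_vscale[OF dsys_HM xa])
    thus ?thesis unfolding z_def IB_vscale by simp
  qed
  show "kappa C f m (vscale (HMbar C f m) k Dd) = vscale (HMunder C f m) k (kappa C f m Dd)"
    using L R M by simp
qed

lemma rhobar_cyc_in: "\<xi> \<in> Nv \<Longrightarrow> D \<xi> = 0 \<Longrightarrow> upper_bound f \<xi> b \<Longrightarrow> rhobar_cyc C f m \<xi> b \<in> vcarrier (HMbar C f m)"
  unfolding rhobar_cyc_def using HMbar_carrier Rb_in by blast

lemma Nv_vadd: "\<xi> \<in> Nv \<Longrightarrow> D \<xi> = 0 \<Longrightarrow> \<eta> \<in> Nv \<Longrightarrow> D \<eta> = 0 \<Longrightarrow>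
   vadd (HMnov C f m) (hcls Nv D \<xi>) (hcls Nv D \<eta>) = hcls Nv D (\<xi> + \<eta>)"
  unfolding HMnov_def by (rule cplx.vadd_hcls[OF cplx_Nov])

lemma Nv_vscale: "\<xi> \<in> Nv \<Longrightarrow> D \<xi> = 0 \<Longrightarrow>
   vscale (HMnov C f m) k (hcls Nv D \<xi>) = hcls Nv D (\<lambda>c. k * \<xi> c)"
  unfolding HMnov_def by (rule cplx.vscale_hcls[OF cplx_Nov])

lemma P3: "lin_map (HMnov C f m) (HMbar C f m) (rhobar C f m)"
  unfolding lin_map_def
proof (intro conjI ballI allI)
  fix X assume "X \<in> vcarrier (HMnov C f m)"
  then obtain \<xi> where x: "\<xi> \<in> Nv" "D \<xi> = 0" "X = hcls Nv D \<xi>" using Nv_carrier by blast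
  obtain b where b: "upper_bound f \<xi> b" using nov_bounded[OF x(1)] by blast
  show "rhobar C f m X \<in> vcarrier (HMbar C f m)" using rho_hcls(1)[OF x(1,2) b] rhobar_cyc_in[OF x(1,2) b] x(3) by simp
next
  fix X Y assume "X \<in> vcarrier (HMnov C f m)" "Y \<in> vcarrier (HMnov C f m)"
  then obtain \<xi> \<eta> where x: "\<xi> \<in> Nv" "D \<xi> = 0" "X = hcls Nv D \<xi>"
    and y: "\<eta> \<in> Nv" "D \<eta> = 0" "Y = hcls Nv D \<eta>" using Nv_carrier by metis
  obtain b where b: "upper_bound f \<xi> b" using nov_bounded[OF x(1)] by blast
  obtain b' where b': "upper_bound f \<eta> b'" using nov_bounded[OF y(1)] by blast
  define B where "B = max b b'"
  have ub: "upper_bound f \<xi> B" "upper_bound f \<eta> B" using bound_mono[OF b max.cobounded1] bound_mono[OF b' max.cobounded2] unfolding B_def by auto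
  have ub3: "upper_bound f (\<xi> + \<eta>) B"
    using ub unfolding upper_bound_def by (metis add.left_neutral plus_fun_apply)
  have s: "\<xi> + \<eta> \<in> Nv" "D (\<xi> + \<eta>) = 0" "upper_bound f (\<xi> + \<eta>) B"
    using nov_add[OF x(1) y(1)] D_add[OF x(1) y(1)] x(2) y(2) ub3 by auto
  have R1: "Rb \<xi> B \<in> vcarrier (IB B)" "Rb \<eta> B \<in> vcarrier (IB B)" using Rb_in x y ub by auto
  have "vadd (HMbar C f m) (rhobar C f m X) (rhobar C f m Y) =
        vadd (HMbar C f m) (dcls IB iB B (Rb \<xi> B)) (dcls IB iB B (Rb \<eta> B))"
    using rho_hcls(1)[OF x(1,2) ub(1)] rho_hcls(1)[OF y(1,2) ub(2)] x(3) y(3) unfolding rhobar_cyc_def by simp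
  also have "\<dots> = dcls IB iB B (vadd (IB B) (iB B B (Rb \<xi> B)) (iB B B (Rb \<eta> B)))"
    unfolding HMbar_def by (rule dsys.dlim_vadd[OF dsys_B R1]) auto
  also have "\<dots> = dcls IB iB B (Rb (\<xi> + \<eta>) B)"
  proof -
    have "vadd (IB B) (iB B B (Rb \<xi> B)) (iB B B (Rb \<eta> B)) = Rb (\<xi> + \<eta>) B"
      unfolding dsys.i_id[OF dsys_B R1(1)] dsys.i_id[OF dsys_B R1(2)] IB_vadd
    proof (rule ext)
      fix a show "vadd (HM a B) (hc a B (trunc f a B \<xi>)) (hc a B (trunc f a B \<eta>)) = hc a B (trunc f a B (\<xi> + \<eta>))"
        using HM_vadd[OF trunc_in[OF x(1)] trunc_cyc[OF x(1,2) ub(1)] trunc_in[OF y(1)] trunc_cyc[OF y(1,2) ub(2)]]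
        by (simp only: trunc_add)
    qed
    thus ?thesis by simp
  qed
  also have "\<dots> = rhobar C f m (vadd (HMnov C f m) X Y)"
    using Nv_vadd[OF x(1,2) y(1,2)] rho_hcls(1)[OF s] x(3) y(3) unfolding rhobar_cyc_def by simp
  finally show "rhobar C f m (vadd (HMnov C f m) X Y) = vadd (HMbar C f m) (rhobar C f m X) (rhobar C f m Y)" by simp
next
  fix k X assume "X \<in> vcarrier (HMnov C f m)"
  then obtain \<xi> where x: "\<xi> \<in> Nv" "D \<xi> = 0" "X = hcls Nv D \<xi>" using Nv_carrier by blast
  obtain b where b: "upper_bound f \<xi> b" using nov_bounded[OF x(1)] by blast
  have s: "(\<lambda>c. k * \<xi> c) \<in> Nv" "D (\<lambda>c. k * \<xi> c) = 0" "upper_bound f (\<lambda>c. k * \<xi> c) b"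
    using nov_scale[OF x(1)] D_scale[OF x(1)] x(2) b unfolding upper_bound_def by (auto simp: zero_fun_def)
  have R1: "Rb \<xi> b \<in> vcarrier (IB b)" using Rb_in x b by auto
  have "vscale (HMbar C f m) k (rhobar C f m X) = vscale (HMbar C f m) k (dcls IB iB b (Rb \<xi> b))"
    using rho_hcls(1)[OF x(1,2) b] x(3) unfolding rhobar_cyc_def by simp
  also have "\<dots> = dcls IB iB b (vscale (IB b) k (Rb \<xi> b))"
    unfolding HMbar_def by (rule dsys.dlim_vscale[OF dsys_B R1])
  also have "\<dots> = dcls IB iB b (Rb (\<lambda>c. k * \<xi> c) b)"
  proof -
    have "vscale (IB b) k (Rb \<xi> b) = Rb (\<lambda>c. k * \<xi> c) b"
      unfolding IB_vscale
    proof (rule ext)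
      fix a show "vscale (HM a b) k (hc a b (trunc f a b \<xi>)) = hc a b (trunc f a b (\<lambda>c. k * \<xi> c))"
        using HM_vscale[OF trunc_in[OF x(1)] trunc_cyc[OF x(1,2) b]] by (simp only: trunc_scale)
    qed
    thus ?thesis by simp
  qed
  also have "\<dots> = rhobar C f m (vscale (HMnov C f m) k X)"
    using Nv_vscale[OF x(1,2)] rho_hcls(1)[OF s] x(3) unfolding rhobar_cyc_def by simp
  finally show "rhobar C f m (vscale (HMnov C f m) k X) = vscale (HMbar C f m) k (rhobar C f m X)" by simp
qed

lemma P6: assumes "X \<in> vcarrier (HMnov C f m)" shows "kappa C f m (rhobar C f m X) = rhounder C f m X"
proof -
  obtain \<xi> where x: "\<xi> \<in> Nv" "D \<xi> = 0" "X = hcls Nv D \<xi>" using Nv_carrier assms by blast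
  obtain b where b: "upper_bound f \<xi> b" using nov_bounded[OF x(1)] by blast
  show ?thesis using rho_hcls[OF x(1,2) b] kappa_dcls[OF Rb_in[OF x(1,2) b]] x(3)
    unfolding rhobar_cyc_def rhounder_cyc_def by simp
qed

lemma lin_map_comp:
  assumes "lin_map V W \<phi>" "lin_map W U \<psi>" "\<And>x. x \<in> vcarrier V \<Longrightarrow> \<chi> x = \<psi> (\<phi> x)"
    and "\<And>x y. x \<in> vcarrier V \<Longrightarrow> y \<in> vcarrier V \<Longrightarrow> vadd V x y \<in> vcarrier V"
    and "\<And>x k. x \<in> vcarrier V \<Longrightarrow> vscale V k x \<in> vcarrier V"
  shows "lin_map V U \<chi>"
  using assms unfolding lin_map_def by simp

lemma Nv_vadd_in: "X \<in> vcarrier (HMnov C f m) \<Longrightarrow> Y \<in> vcarrier (HMnov C f m) \<Longrightarrow> vadd (HMnov C f m) X Y \<in> vcarrier (HMnov C f m)"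
proof -
  assume "X \<in> vcarrier (HMnov C f m)" "Y \<in> vcarrier (HMnov C f m)"
  then obtain \<xi> \<eta> where x: "\<xi> \<in> Nv" "D \<xi> = 0" "X = hcls Nv D \<xi>"
    and y: "\<eta> \<in> Nv" "D \<eta> = 0" "Y = hcls Nv D \<eta>" using Nv_carrier by metis
  have "\<xi> + \<eta> \<in> Nv" "D (\<xi> + \<eta>) = 0" using nov_add[OF x(1) y(1)] D_add[OF x(1) y(1)] x(2) y(2) by auto
  thus ?thesis using Nv_vadd[OF x(1,2) y(1,2)] x(3) y(3) Nv_carrier by auto
qed

lemma Nv_vscale_in: "X \<in> vcarrier (HMnov C f m) \<Longrightarrow> vscale (HMnov C f m) k X \<in> vcarrier (HMnov C f m)"
proof -
  assume "X \<in> vcarrier (HMnov C f m)"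
  then obtain \<xi> where x: "\<xi> \<in> Nv" "D \<xi> = 0" "X = hcls Nv D \<xi>" using Nv_carrier by blast
  have "(\<lambda>c. k * \<xi> c) \<in> Nv" "D (\<lambda>c. k * \<xi> c) = 0" using nov_scale[OF x(1)] D_scale[OF x(1)] x(2)
    by (auto simp: zero_fun_def)
  thus ?thesis using Nv_vscale[OF x(1,2)] x(3) Nv_carrier by auto
qed

lemma P4: "lin_map (HMnov C f m) (HMunder C f m) (rhounder C f m)"
  by (rule lin_map_comp[OF P3 P5]) (auto simp: P6 Nv_vadd_in Nv_vscale_in)

lemma rhobar_inj: "inj_on (rhobar C f m) (vcarrier (HMnov C f m))"
proof (rule inj_onI)
  fix X Y assume X: "X \<in> vcarrier (HMnov C f m)" and Y: "Y \<in> vcarrier (HMnov C f m)"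
    and eq: "rhobar C f m X = rhobar C f m Y"
  obtain \<xi> \<eta> where x: "\<xi> \<in> Nv" "D \<xi> = 0" "X = hcls Nv D \<xi>"
    and y: "\<eta> \<in> Nv" "D \<eta> = 0" "Y = hcls Nv D \<eta>" using Nv_carrier X Y by metis
  obtain b where b: "upper_bound f \<xi> b" using nov_bounded[OF x(1)] by blast
  obtain b' where b': "upper_bound f \<eta> b'" using nov_bounded[OF y(1)] by blast
  define B where "B = max b b'"
  have ub: "upper_bound f \<xi> B" "upper_bound f \<eta> B" using bound_mono[OF b max.cobounded1] bound_mono[OF b' max.cobounded2] unfolding B_def by auto
  have R1: "Rb \<xi> B \<in> vcarrier (IB B)" "Rb \<eta> B \<in> vcarrier (IB B)" using Rb_in x y ub by auto
  have "dcls IB iB B (Rb \<xi> B) = dcls IB iB B (Rb \<eta> B)"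
    using eq rho_hcls(1)[OF x(1,2) ub(1)] rho_hcls(1)[OF y(1,2) ub(2)] x(3) y(3) unfolding rhobar_cyc_def by simp
  then obtain B' where B': "B \<le> B'" "iB B' B (Rb \<xi> B) = iB B' B (Rb \<eta> B)"
    using dsys.dcls_eq_iff[OF dsys_B R1] dsys.rel_def[OF dsys_B] by auto
  have ub': "upper_bound f \<xi> B'" "upper_bound f \<eta> B'" using bound_mono ub B' by auto
  have "Rb \<xi> B' = Rb \<eta> B'" using B'(2) iB_Rb[OF ub(1) B'(1) x(1)] iB_Rb[OF ub(2) B'(1) y(1)] by simp
  have bd: "\<exists>yy\<in>CMab a B'. trunc f a B' (\<xi> - \<eta>) = dd a B' yy" for a
  proof -
    have "hc a B' (trunc f a B' \<xi>) = hc a B' (trunc f a B' \<eta>)" using \<open>Rb \<xi> B' = Rb \<eta> B'\<close> by metis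
    then obtain yy where "yy \<in> CMab a B'" "trunc f a B' \<xi> = trunc f a B' \<eta> + dd a B' yy"
      using hc_eq_iff[OF trunc_in[OF x(1)] trunc_in[OF y(1)]] by blast
    thus ?thesis unfolding trunc_diff by (metis add_diff_cancel_left')
  qed
  have dN: "\<xi> - \<eta> \<in> Nv" using cplx.diff_in[OF cplx_Nov x(1) y(1)] .
  have dB: "upper_bound f (\<xi> - \<eta>) B'" using ub' unfolding upper_bound_def by force
  obtain \<omega> where "\<omega> \<in> Nv" "\<xi> - \<eta> = D \<omega>" using mittag[OF dN dB bd] by blast
  hence "\<xi> = \<eta> + D \<omega>" by (simp add: algebra_simps)
  thus "X = Y" using hcNv_eq[OF x(1) y(1)] \<open>\<omega> \<in> Nv\<close> x(3) y(3) by blast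
qed

end

context floer begin

lemma seqlim_cyc:
  assumes w_in: "\<And>n. w n \<in> CMab (aa n) (Bw n)" and w_comp: "\<And>n. lt (aa n) (w (Suc n)) = w n"
    and w_cyc: "\<And>n. dd (aa n) (Bw n) (w n) = 0"
  shows "D (seqlim w) = 0"
proof (rule ext)
  fix c'
  show "D (seqlim w) c' = 0 c'"
  proof (cases "c' \<in> C")
    case False thus ?thesis using D_notC by simp
  next
    case True
    define n where "n = nat \<lceil>- f c'\<rceil>"
    have an: "aa n \<le> f c'" unfolding n_def by (rule aa_below)
    have e: "D (seqlim w) c' = D (w n) c'" by (rule D_seqlim[OF w_in w_comp an])
    show ?thesis
    proof (cases "f c' \<le> Bw n")
      case True
      have "D (w n) c' = dd (aa n) (Bw n) (w n) c'" using dCM_eq[OF w_in[of n]] an True unfolding trunc_def by simp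
      thus ?thesis using e w_cyc by simp
    next
      case False
      have "D (w n) c' = 0" using D_bound[OF CM_Nov[OF w_in[of n]] CM_bound[OF w_in[of n]]] False
        unfolding upper_bound_def by force
      thus ?thesis using e by simp
    qed
  qed
qed

lemma pick_HM: assumes "X \<in> vcarrier (HM a b)"
  shows "pick X \<in> CMab a b" "dd a b (pick X) = 0" "hc a b (pick X) = X"
proof -
  obtain z where z: "z \<in> CMab a b" "dd a b z = 0" "X = hc a b z" using HM_carrierE[OF assms] .
  show "pick X \<in> CMab a b" "dd a b (pick X) = 0" "hc a b (pick X) = X"
    using cplx.pick_hcls_props[OF cplx_CM z(1,2)] z(3) by auto
qed

lemma nat_below: "aa (nat \<lceil>- a\<rceil>) \<le> a" by (rule aa_below)

lemma rhobar_surj: assumes Dd: "Dd \<in> vcarrier (HMbar C f m)"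
  shows "\<exists>X\<in>vcarrier (HMnov C f m). rhobar C f m X = Dd"
proof -
  obtain b x where x: "x \<in> vcarrier (IB b)" "Dd = dcls IB iB b x" using Dd HMbar_carrier by blast
  have xa: "\<And>a. x a \<in> vcarrier (HM a b)" "\<And>a1 a2. a1 \<le> a2 \<Longrightarrow> Hpp b a2 a1 (x a1) = x a2"
    using x(1) IB_carrier by auto
  define z where "z n = pick (x (aa n))" for n
  have z: "z n \<in> CMab (aa n) b" "dd (aa n) b (z n) = 0" "hc (aa n) b (z n) = x (aa n)" for n
    using pick_HM[OF xa(1)] z_def by auto
  have step: "\<exists>y\<in>CMab (aa n) b. lt (aa n) (z (Suc n)) = z n + dd (aa n) b y" for n
  proof -
    have "hc (aa n) b (lt (aa n) (z (Suc n))) = hc (aa n) b (z n)"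
      using Hp_hc[OF aa_Suc z(1)] z(3) xa(2)[OF aa_Suc[of n]] by metis
    thus ?thesis using hc_eq_iff[OF lt_CM[OF aa_Suc z(1)] z(1)] by blast
  qed
  obtain zz where zz: "\<And>n. zz n \<in> CMab (aa n) b" "\<And>n. dd (aa n) b (zz n) = 0"
    "\<And>n. \<exists>y\<in>CMab (aa n) b. zz n = z n + dd (aa n) b y" "\<And>n. lt (aa n) (zz (Suc n)) = zz n"
    using lift[of z "\<lambda>_. b", OF z(1) z(2) order_refl step] by metis
  define \<xi> where "\<xi> = seqlim zz"
  have xN: "\<xi> \<in> Nv" unfolding \<xi>_def by (rule seqlim_Nov[of zz "\<lambda>_. b", OF zz(1) zz(4)])
  have xD: "D \<xi> = 0" unfolding \<xi>_def by (rule seqlim_cyc[of zz "\<lambda>_. b", OF zz(1) zz(4) zz(2)])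
  have xb: "upper_bound f \<xi> b" unfolding \<xi>_def by (rule seqlim_bound[of zz "\<lambda>_. b", OF zz(1) zz(4)]) simp
  have R: "Rb \<xi> b = x"
  proof (rule ext)
    fix a :: real
    define n where "n = nat \<lceil>- a\<rceil>"
    have an: "aa n \<le> a" unfolding n_def by (rule aa_below)
    have "trunc f a b \<xi> = trunc f a b (lt (aa n) \<xi>)" using trunc_lt[OF an] by simp
    also have "\<dots> = trunc f a b (zz n)" unfolding \<xi>_def using lt_seqlim[of zz "\<lambda>_. b", OF zz(1) zz(4)] by simp
    also have "\<dots> = lt a (zz n)" by (rule trunc_eq_lt[OF CM_bound[OF zz(1)]])
    finally have t: "trunc f a b \<xi> = lt a (zz n)" .
    have "hc (aa n) b (zz n) = hc (aa n) b (z n)" using hc_eq_iff[OF zz(1) z(1)] zz(3) by blast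
    hence "hc a b (lt a (zz n)) = Hpp b a (aa n) (x (aa n))" using Hp_hc[OF an zz(1)] z(3) by simp
    thus "hc a b (trunc f a b \<xi>) = x a" using t xa(2)[OF an] by simp
  qed
  have "rhobar C f m (hcls Nv D \<xi>) = Dd" using rho_hcls(1)[OF xN xD xb] R x(2) unfolding rhobar_cyc_def by simp
  moreover have "hcls Nv D \<xi> \<in> vcarrier (HMnov C f m)" using Nv_carrier xN xD by blast
  ultimately show ?thesis by blast
qed

end

context floer begin

lemma rhounder_surj: assumes U: "U \<in> vcarrier (HMunder C f m)"
  shows "\<exists>X\<in>vcarrier (HMnov C f m). rhounder C f m X = U"
proof -
  have Ua: "\<forall>a. \<exists>p. snd p \<in> vcarrier (HM a (fst p)) \<and> U a = dA a (fst p) (snd p)"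
    using U unfolding HMunder_carrier dlimA_carrier by auto
  obtain P where P: "\<And>a. snd (P a) \<in> vcarrier (HM a (fst (P a))) \<and> U a = dA a (fst (P a)) (snd (P a))"
    using choice[OF Ua] by blast
  have Uc: "\<And>a1 a2. a1 \<le> a2 \<Longrightarrow> piA C f m a2 a1 (U a1) = U a2" using U unfolding HMunder_carrier by auto
  define bb where "bb n = fst (P (aa n))" for n
  define XX where "XX n = snd (P (aa n))" for n
  have XX: "XX n \<in> vcarrier (HM (aa n) (bb n))" "U (aa n) = dA (aa n) (bb n) (XX n)" for n
    using P unfolding bb_def XX_def by auto
  have Bex: "\<exists>B. bb (Suc n) \<le> B \<and> bb n \<le> B \<and>
      Hii (aa n) B (bb (Suc n)) (Hpp (bb (Suc n)) (aa n) (aa (Suc n)) (XX (Suc n))) = Hii (aa n) B (bb n) (XX n)" for n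
  proof -
    have "dA (aa n) (bb (Suc n)) (Hpp (bb (Suc n)) (aa n) (aa (Suc n)) (XX (Suc n))) = dA (aa n) (bb n) (XX n)"
      using Uc[OF aa_Suc[of n]] XX(2)[of "Suc n"] XX(2)[of n] piA_dcls[OF aa_Suc XX(1)[of "Suc n"]] by simp
    thus ?thesis using dsys.dcls_eq_iff[OF dsys_HM Hp_in[OF aa_Suc XX(1)] XX(1)] dsys.rel_def[OF dsys_HM] by auto
  qed
  obtain Bn where Bn: "\<And>n. bb (Suc n) \<le> Bn n \<and> bb n \<le> Bn n \<and>
      Hii (aa n) (Bn n) (bb (Suc n)) (Hpp (bb (Suc n)) (aa n) (aa (Suc n)) (XX (Suc n))) = Hii (aa n) (Bn n) (bb n) (XX n)"
  proof -
    have "\<forall>n. \<exists>B. bb (Suc n) \<le> B \<and> bb n \<le> B \<and>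
      Hii (aa n) B (bb (Suc n)) (Hpp (bb (Suc n)) (aa n) (aa (Suc n)) (XX (Suc n))) = Hii (aa n) B (bb n) (XX n)"
      using Bex by blast
    from choice[OF this] show ?thesis using that by blast
  qed
  define Bw where "Bw = rec_nat (bb 0) (\<lambda>n B. max B (max (bb (Suc n)) (Bn n)))"
  have Bw0: "Bw 0 = bb 0" and BwS: "Bw (Suc n) = max (Bw n) (max (bb (Suc n)) (Bn n))" for n
    unfolding Bw_def by simp_all
  have bbBw: "bb n \<le> Bw n" for n by (cases n) (auto simp: Bw0 BwS)
  have Bwmono: "Bw n \<le> Bw (Suc n)" for n using BwS by simp
  have BnBw: "Bn n \<le> Bw (Suc n)" for n using BwS by simp
  define z where "z n = pick (XX n)" for n
  have z0: "z n \<in> CMab (aa n) (bb n)" "dd (aa n) (bb n) (z n) = 0" "hc (aa n) (bb n) (z n) = XX n" for n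
    using pick_HM[OF XX(1)] z_def by auto
  have z: "z n \<in> CMab (aa n) (Bw n)" "dd (aa n) (Bw n) (z n) = 0" for n
    using CM_mono[OF order_refl bbBw z0(1)] cyc_up[OF bbBw z0(1,2)] by auto
  have step: "\<exists>y\<in>CMab (aa n) (Bw (Suc n)). lt (aa n) (z (Suc n)) = z n + dd (aa n) (Bw (Suc n)) y" for n
  proof -
    define B where "B = Bn n"
    have B: "bb (Suc n) \<le> B" "bb n \<le> B" "B \<le> Bw (Suc n)" using Bn[of n] BnBw[of n] B_def by auto
    have l1: "lt (aa n) (z (Suc n)) \<in> CMab (aa n) (bb (Suc n))" using lt_CM[OF aa_Suc z0(1)] .
    have "Hpp (bb (Suc n)) (aa n) (aa (Suc n)) (XX (Suc n)) = hc (aa n) (bb (Suc n)) (lt (aa n) (z (Suc n)))"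
      using Hp_hc[OF aa_Suc z0(1)[of "Suc n"]] z0(3)[of "Suc n"] by simp
    hence "Hii (aa n) B (bb (Suc n)) (Hpp (bb (Suc n)) (aa n) (aa (Suc n)) (XX (Suc n))) = hc (aa n) B (lt (aa n) (z (Suc n)))"
      using Hi_hc[OF B(1) l1] by simp
    moreover have "Hii (aa n) B (bb n) (XX n) = hc (aa n) B (z n)"
      using Hi_hc[OF B(2) z0(1)[of n]] z0(3)[of n] by simp
    ultimately have e: "hc (aa n) B (lt (aa n) (z (Suc n))) = hc (aa n) B (z n)" using Bn[of n] B_def by simp
    have m1: "lt (aa n) (z (Suc n)) \<in> CMab (aa n) B" using CM_mono[OF order_refl B(1) l1] .
    have m2: "z n \<in> CMab (aa n) B" using CM_mono[OF order_refl B(2) z0(1)] .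
    have "hc (aa n) (Bw (Suc n)) (lt (aa n) (z (Suc n))) = hc (aa n) (Bw (Suc n)) (z n)"
      using Hi_hc[OF B(3) m1] Hi_hc[OF B(3) m2] e by metis
    thus ?thesis using hc_eq_iff[OF CM_mono[OF order_refl B(3) m1] CM_mono[OF order_refl B(3) m2]] by blast
  qed
  obtain zz where zz: "\<And>n. zz n \<in> CMab (aa n) (Bw n)" "\<And>n. dd (aa n) (Bw n) (zz n) = 0"
    "\<And>n. \<exists>y\<in>CMab (aa n) (Bw n). zz n = z n + dd (aa n) (Bw n) y" "\<And>n. lt (aa n) (zz (Suc n)) = zz n"
    using lift[of z Bw, OF z(1) z(2) Bwmono step] by metis
  define \<xi> where "\<xi> = seqlim zz"
  have xN: "\<xi> \<in> Nv" unfolding \<xi>_def by (rule seqlim_Nov[of zz Bw, OF zz(1) zz(4)])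
  have xD: "D \<xi> = 0" unfolding \<xi>_def by (rule seqlim_cyc[of zz Bw, OF zz(1) zz(4) zz(2)])
  obtain bs where xb: "upper_bound f \<xi> bs" using nov_bounded[OF xN] by blast
  have R: "rhounder_cyc C f m \<xi> bs = U"
  proof (rule ext)
    fix a :: real
    define n where "n = nat \<lceil>- a\<rceil>"
    have an: "aa n \<le> a" unfolding n_def by (rule aa_below)
    have ltx: "lt (aa n) \<xi> = zz n" unfolding \<xi>_def using lt_seqlim[of zz Bw, OF zz(1) zz(4)] by simp
    have "trunc f a bs \<xi> = trunc f a bs (lt (aa n) \<xi>)" using trunc_lt[OF an] by simp
    also have "\<dots> = lt a (lt (aa n) \<xi>)" using trunc_eq_lt[OF lt_bound[OF xb]] .
    also have "\<dots> = lt a (zz n)" using ltx by simp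
    finally have t: "trunc f a bs \<xi> = lt a (zz n)" .
    have Ua': "U a = dA a (bb n) (hc a (bb n) (lt a (z n)))"
      using Uc[OF an] XX(2)[of n] piA_dcls[OF an XX(1)[of n]] Hp_hc[OF an z0(1)[of n]] z0(3)[of n] by simp
    define T where "T = max bs (max (bb n) (Bw n))"
    have T: "bs \<le> T" "bb n \<le> T" "Bw n \<le> T" unfolding T_def by auto
    have m1: "lt a (zz n) \<in> CMab a bs" using trunc_in[OF xN] t by metis
    have m2: "lt a (z n) \<in> CMab a (bb n)" using lt_CM[OF an z0(1)] .
    have c1: "hc a bs (lt a (zz n)) \<in> vcarrier (HM a bs)"
      using HM_carrierI[OF trunc_in[OF xN] trunc_cyc[OF xN xD xb]] t by metis
    have c2: "hc a (bb n) (lt a (z n)) \<in> vcarrier (HM a (bb n))"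
      using HM_carrierI[OF m2 cyc_lt[OF an z0(1,2)]] .
    obtain y where y: "y \<in> CMab (aa n) (Bw n)" "zz n = z n + dd (aa n) (Bw n) y" using zz(3) by blast
    have ly: "lt a y \<in> CMab a (Bw n)" using lt_CM[OF an y(1)] .
    have "lt a (zz n) = lt a (z n) + dd a (Bw n) (lt a y)" using y(2) lt_add lt_dd[OF an y(1)] by simp
    also have "\<dots> = lt a (z n) + dd a T (lt a y)" using dd_up[OF T(3) ly] by simp
    finally have "hc a T (lt a (zz n)) = hc a T (lt a (z n))"
      using hc_eq_iff[OF CM_mono[OF order_refl T(1) m1] CM_mono[OF order_refl T(2) m2]]
        CM_mono[OF order_refl T(3) ly] by blast
    hence "Hii a T bs (hc a bs (lt a (zz n))) = Hii a T (bb n) (hc a (bb n) (lt a (z n)))"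
      using Hi_hc[OF T(1) m1] Hi_hc[OF T(2) m2] by simp
    hence "dA a bs (hc a bs (lt a (zz n))) = dA a (bb n) (hc a (bb n) (lt a (z n)))"
      by (rule dsys.dcls_eqI[OF dsys_HM c1 c2 T(1) T(2)])
    thus "rhounder_cyc C f m \<xi> bs a = U a" unfolding rhounder_cyc_def using t Ua' by simp
  qed
  have "rhounder C f m (hcls Nv D \<xi>) = U" using rho_hcls(2)[OF xN xD xb] R by simp
  moreover have "hcls Nv D \<xi> \<in> vcarrier (HMnov C f m)" using Nv_carrier xN xD by blast
  ultimately show ?thesis by blast
qed

end

theorem theoremA:
  fixes C :: "'c set" and f :: "'c \<Rightarrow> real" and m :: "'c \<Rightarrow> 'c \<Rightarrow> 'k::field"
  assumes "floer_triple C f m"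
  shows
    \<comment> \<open>well-definedness of \<open>\<overline>\<rho>\<close>, \<open>\<underline>\<rho>\<close>: independent of the cycle representative and of the bound\<close>
    "(\<forall>\<xi>\<in>Nov C f. \<forall>\<xi>'\<in>Nov C f. \<forall>b b'.
        dNov C m \<xi> = 0 \<and> dNov C m \<xi>' = 0 \<and> hcls (Nov C f) (dNov C m) \<xi> = hcls (Nov C f) (dNov C m) \<xi>'
        \<and> upper_bound f \<xi> b \<and> upper_bound f \<xi>' b' \<longrightarrow>
        rhobar_cyc C f m \<xi> b = rhobar_cyc C f m \<xi>' b' \<and> rhounder_cyc C f m \<xi> b = rhounder_cyc C f m \<xi>' b')
     \<and> \<comment> \<open>well-definedness of \<open>\<kappa>\<close>: independent of the representative\<close>
     (\<forall>D\<in>vcarrier (HMbar C f m). \<forall>p\<in>D. \<forall>q\<in>D. kappa_rep C f m p = kappa_rep C f m q)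
     \<and> lin_map (HMnov C f m) (HMbar C f m) (rhobar C f m)
     \<and> lin_map (HMnov C f m) (HMunder C f m) (rhounder C f m)
     \<and> lin_map (HMbar C f m) (HMunder C f m) (kappa C f m)
     \<and> (\<forall>X\<in>vcarrier (HMnov C f m). kappa C f m (rhobar C f m X) = rhounder C f m X)
     \<and> lin_iso (HMnov C f m) (HMbar C f m) (rhobar C f m)
     \<and> kappa C f m ` vcarrier (HMbar C f m) = vcarrier (HMunder C f m)
     \<and> rhounder C f m ` vcarrier (HMnov C f m) = vcarrier (HMunder C f m)"
proof -
  interpret floer C f m by (rule floer.intro[OF assms])
  have L3: "lin_map (HMnov C f m) (HMbar C f m) (rhobar C f m)" by (rule P3)
  have L4: "lin_map (HMnov C f m) (HMunder C f m) (rhounder C f m)" by (rule P4)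
  have L5: "lin_map (HMbar C f m) (HMunder C f m) (kappa C f m)" by (rule P5)
  have W1: "\<forall>\<xi>\<in>Nov C f. \<forall>\<xi>'\<in>Nov C f. \<forall>b b'.
        dNov C m \<xi> = 0 \<and> dNov C m \<xi>' = 0 \<and> hcls (Nov C f) (dNov C m) \<xi> = hcls (Nov C f) (dNov C m) \<xi>'
        \<and> upper_bound f \<xi> b \<and> upper_bound f \<xi>' b' \<longrightarrow>
        rhobar_cyc C f m \<xi> b = rhobar_cyc C f m \<xi>' b' \<and> rhounder_cyc C f m \<xi> b = rhounder_cyc C f m \<xi>' b'"
  proof (intro ballI allI impI)
    fix \<xi> \<xi>' b b'
    assume x: "\<xi> \<in> Nov C f" "\<xi>' \<in> Nov C f"
      and H: "dNov C m \<xi> = 0 \<and> dNov C m \<xi>' = 0 \<and> hcls (Nov C f) (dNov C m) \<xi> = hcls (Nov C f) (dNov C m) \<xi>'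
        \<and> upper_bound f \<xi> b \<and> upper_bound f \<xi>' b'"
    show "rhobar_cyc C f m \<xi> b = rhobar_cyc C f m \<xi>' b' \<and> rhounder_cyc C f m \<xi> b = rhounder_cyc C f m \<xi>' b'"
      using P1[of \<xi> \<xi>' b b'] x H by blast
  qed
  have W6: "\<forall>X\<in>vcarrier (HMnov C f m). kappa C f m (rhobar C f m X) = rhounder C f m X"
    using P6 by blast
  have img3: "rhobar C f m ` vcarrier (HMnov C f m) = vcarrier (HMbar C f m)"
  proof
    show "rhobar C f m ` vcarrier (HMnov C f m) \<subseteq> vcarrier (HMbar C f m)"
      using L3 unfolding lin_map_def by blast
    show "vcarrier (HMbar C f m) \<subseteq> rhobar C f m ` vcarrier (HMnov C f m)"
      using rhobar_surj by blast
  qed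
  have iso: "lin_iso (HMnov C f m) (HMbar C f m) (rhobar C f m)"
    unfolding lin_iso_def bij_betw_def using L3 rhobar_inj img3 by blast
  have img4: "rhounder C f m ` vcarrier (HMnov C f m) = vcarrier (HMunder C f m)"
  proof
    show "rhounder C f m ` vcarrier (HMnov C f m) \<subseteq> vcarrier (HMunder C f m)"
      using L4 unfolding lin_map_def by blast
    show "vcarrier (HMunder C f m) \<subseteq> rhounder C f m ` vcarrier (HMnov C f m)"
      using rhounder_surj by blast
  qed
  have img5: "kappa C f m ` vcarrier (HMbar C f m) = vcarrier (HMunder C f m)"
  proof
    show "kappa C f m ` vcarrier (HMbar C f m) \<subseteq> vcarrier (HMunder C f m)"
      using L5 unfolding lin_map_def by blast
    show "vcarrier (HMunder C f m) \<subseteq> kappa C f m ` vcarrier (HMbar C f m)"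
    proof
      fix U assume "U \<in> vcarrier (HMunder C f m)"
      then obtain X where X: "X \<in> vcarrier (HMnov C f m)" "rhounder C f m X = U" using rhounder_surj by blast
      have "rhobar C f m X \<in> vcarrier (HMbar C f m)" using L3 X(1) unfolding lin_map_def by blast
      moreover have "kappa C f m (rhobar C f m X) = U" using P6[OF X(1)] X(2) by simp
      ultimately show "U \<in> kappa C f m ` vcarrier (HMbar C f m)" by blast
    qed
  qed
  show ?thesis using W1 P2 L3 L4 L5 W6 iso img5 img4 by blast
qed

end
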